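(* Assume the different $\mathfrak{d}=(\delta)$ of $F$ is principal, and let $q\in\mathcal{O}$ be a product of prime elements. Then for all $\nu,\mu\in\mathcal{O}$, $$S(\delta^{-1}\nu,\delta^{-1}\mu;q)=\sum_{(d)\mid(\nu,\mu,q)}N((d))\,S\left(\delta^{-1},\delta^{-1}\frac{\nu\mu}{d^2};\frac{q}{d}\right),$$ where the sum runs over all principal ideals $(d)$ dividing the ideal $(\nu,\mu,q)=\nu\mathcal{O}+\mu\mathcal{O}+q\mathcal{O}$, and $d$ is any generator of $(d)$ (the summand does not depend on this choice).
   Context: $F$ is a totally real number field with ring of integers $\mathcal{O}$ and different $\mathfrak{d}$. A prime element is a generator of a nonzero prime ideal of $\mathcal{O}$; $N((d))$ is the absolute norm of the ideal $(d)$. $e(\nu)=\exp(2\pi i\,\mathrm{Tr}_{F/\mathbb{Q}}(\nu))$. For $\nu,\mu\in\mathfrak{d}^{-1}$ and nonzero $q\in\mathcal{O}$, $S(\nu,\mu;q)=\sum_{x\in(\mathcal{O}/q\mathcal{O})^\times}e\left(\frac{\nu x+\mu x^{-1}}{q}\right)$, where $xx^{-1}\equiv1\bmod q$. *)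

theory Defs
  imports Complex_Main "HOL-Computational_Algebra.Polynomial"
begin

text \<open>A number field is modelled as a subfield F of the complex numbers that is
finite-dimensional over the rationals.\<close>

definition subfield_C :: "complex set \<Rightarrow> bool" where
  "subfield_C F \<longleftrightarrow> 0 \<in> F \<and> 1 \<in> F \<and>
     (\<forall>x\<in>F. \<forall>y\<in>F. x + y \<in> F \<and> x * y \<in> F \<and> - x \<in> F) \<and>
     (\<forall>x\<in>F. x \<noteq> 0 \<longrightarrow> inverse x \<in> F)"

definition number_field :: "complex set \<Rightarrow> bool" where
  "number_field F \<longleftrightarrow> subfield_C F \<and>
     (\<exists>B. finite B \<and> B \<subseteq> F \<and>
        (\<forall>x\<in>F. \<exists>c :: complex \<Rightarrow> rat. x = (\<Sum>b\<in>B. of_rat (c b) * b)))"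

definition embeddings :: "complex set \<Rightarrow> (complex \<Rightarrow> complex) set" where
  "embeddings F = {\<sigma>. \<sigma> 1 = 1 \<and>
     (\<forall>x\<in>F. \<forall>y\<in>F. \<sigma> (x + y) = \<sigma> x + \<sigma> y \<and> \<sigma> (x * y) = \<sigma> x * \<sigma> y) \<and>
     (\<forall>x. x \<notin> F \<longrightarrow> \<sigma> x = 0)}"

definition totally_real_number_field :: "complex set \<Rightarrow> bool" where
  "totally_real_number_field F \<longleftrightarrow> number_field F \<and>
     (\<forall>\<sigma>\<in>embeddings F. \<forall>x\<in>F. \<sigma> x \<in> \<real>)"

definition trace :: "complex set \<Rightarrow> complex \<Rightarrow> complex" where
  "trace F x = (\<Sum>\<sigma>\<in>embeddings F. \<sigma> x)"

definition ints :: "complex set \<Rightarrow> complex set" ("\<O>") where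
  "\<O> F = {x \<in> F. algebraic_int x}"

definition dvdO :: "complex set \<Rightarrow> complex \<Rightarrow> complex \<Rightarrow> bool" where
  "dvdO F a b \<longleftrightarrow> (\<exists>k\<in>\<O> F. b = a * k)"

definition inv_different :: "complex set \<Rightarrow> complex set" where
  "inv_different F = {x \<in> F. \<forall>y\<in>\<O> F. trace F (x * y) \<in> \<int>}"

text \<open>The different is principal, generated by delta: d = delta O, i.e. d^{-1} = delta^{-1} O.\<close>
definition different_generator :: "complex set \<Rightarrow> complex \<Rightarrow> bool" where
  "different_generator F \<delta> \<longleftrightarrow> \<delta> \<in> \<O> F \<and> \<delta> \<noteq> 0 \<and>
     inv_different F = {x / \<delta> | x. x \<in> \<O> F}"

definition prime_elemO :: "complex set \<Rightarrow> complex \<Rightarrow> bool" where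
  "prime_elemO F p \<longleftrightarrow> p \<in> \<O> F \<and> p \<noteq> 0 \<and> \<not> dvdO F p 1 \<and>
     (\<forall>a\<in>\<O> F. \<forall>b\<in>\<O> F. dvdO F p (a * b) \<longrightarrow> dvdO F p a \<or> dvdO F p b)"

definition principal_ideal :: "complex set \<Rightarrow> complex \<Rightarrow> complex set" where
  "principal_ideal F d = {d * x | x. x \<in> \<O> F}"

definition congO :: "complex set \<Rightarrow> complex \<Rightarrow> (complex \<times> complex) set" where
  "congO F q = {(a, b). a \<in> \<O> F \<and> b \<in> \<O> F \<and> dvdO F q (a - b)}"

definition ideal_norm :: "complex set \<Rightarrow> complex \<Rightarrow> nat" where
  "ideal_norm F d = card (\<O> F // congO F d)"

definition unit_classes :: "complex set \<Rightarrow> complex \<Rightarrow> complex set set" where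
  "unit_classes F q = {x \<in> \<O> F. \<exists>y\<in>\<O> F. dvdO F q (x * y - 1)} // congO F q"

definition e :: "complex set \<Rightarrow> complex \<Rightarrow> complex" where
  "e F z = exp (2 * of_real pi * \<i> * trace F z)"

definition kloosterman :: "complex set \<Rightarrow> complex \<Rightarrow> complex \<Rightarrow> complex \<Rightarrow> complex" where
  "kloosterman F \<nu> \<mu> q =
     (\<Sum>C\<in>unit_classes F q.
        let x = (SOME x. x \<in> C);
            y = (SOME y. y \<in> \<O> F \<and> dvdO F q (x * y - 1))
        in e F ((\<nu> * x + \<mu> * y) / q))"

end

theory Submission
  imports Defs Jordan_Normal_Form.Determinant Jordan_Normal_Form.Char_Poly
begin

lemma alg_int_from_matrix:
  fixes x :: complex and gs :: "complex list"
  assumes nz: "\<exists>g\<in>set gs. g \<noteq> 0"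
  and rel: "\<forall>i<length gs. \<exists>c::nat\<Rightarrow>int. x * gs!i = (\<Sum>j<length gs. of_int (c j) * gs!j)"
  shows "algebraic_int x"
proof -
  define n where "n = length gs"
  define C where "C i = (SOME c::nat\<Rightarrow>int. x * gs!i = (\<Sum>j<n. of_int (c j) * gs!j))" for i
  have C: "x * gs!i = (\<Sum>j<n. of_int (C i j) * gs!j)" if "i < n" for i
    unfolding C_def using someI_ex[OF rel[rule_format, OF that[unfolded n_def]]] n_def by simp
  define A :: "int mat" where "A = mat n n (\<lambda>(i,j). C i j)"
  have A: "A \<in> carrier_mat n n" unfolding A_def by simp
  define Ac :: "complex mat" where "Ac = of_int_hom.mat_hom A"
  have Ac: "Ac \<in> carrier_mat n n" unfolding Ac_def using A by simp
  define v :: "complex vec" where "v = vec n (\<lambda>i. gs!i)"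
  have v: "v \<in> carrier_vec n" unfolding v_def by simp
  have vnz: "v \<noteq> 0\<^sub>v n"
  proof
    assume "v = 0\<^sub>v n"
    then have "\<forall>i<n. gs!i = 0" unfolding v_def by (metis index_vec index_zero_vec(1))
    then show False using nz unfolding n_def by (metis in_set_conv_nth)
  qed
  have "Ac *\<^sub>v v = x \<cdot>\<^sub>v v"
  proof (rule eq_vecI)
    fix i assume i: "i < dim_vec (x \<cdot>\<^sub>v v)"
    then have i': "i < n" using v by simp
    have "(Ac *\<^sub>v v) $ i = (\<Sum>j<n. of_int (C i j) * gs!j)"
      using i' Ac A unfolding Ac_def v_def A_def
      by (simp add: scalar_prod_def lessThan_atLeast0 mult.commute)
    also have "\<dots> = x * gs!i" using C[OF i'] by simp
    also have "\<dots> = (x \<cdot>\<^sub>v v) $ i" using i' unfolding v_def by simp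
    finally show "(Ac *\<^sub>v v) $ i = (x \<cdot>\<^sub>v v) $ i" .
  qed (use v Ac in simp)
  then have "eigenvalue Ac x" unfolding eigenvalue_def eigenvector_def using v vnz Ac by auto
  then have "poly (char_poly Ac) x = 0" using eigenvalue_root_char_poly[OF Ac] by simp
  moreover have "char_poly Ac = of_int_poly (char_poly A)"
    unfolding Ac_def by (rule of_int_hom.char_poly_hom[OF A])
  ultimately have "poly (of_int_poly (char_poly A)) x = 0" by simp
  moreover have "monic (char_poly A)" using degree_monic_char_poly[OF A] by simp
  ultimately show ?thesis unfolding algebraic_int_altdef_ipoly by blast
qed

definition zspan :: "complex set \<Rightarrow> complex set" where
  "zspan G = {z. \<exists>c::complex\<Rightarrow>int. z = (\<Sum>h\<in>G. of_int (c h) * h)}"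

lemma zspan_0: "0 \<in> zspan G"
  unfolding zspan_def by (rule CollectI, rule exI[of _ "\<lambda>_. 0"]) simp

lemma zspan_gen: assumes "finite G" "g \<in> G" shows "g \<in> zspan G"
proof -
  have "(\<Sum>h\<in>G. of_int (if h = g then 1 else 0) * h) = (\<Sum>h\<in>G. if h = g then h else 0)"
    by (rule sum.cong) auto
  also have "\<dots> = g" using assms by (simp add: sum.delta')
  finally have "(\<Sum>h\<in>G. of_int (if h = g then 1 else 0) * h) = g" .
  then show ?thesis unfolding zspan_def by (intro CollectI exI[of _ "\<lambda>h. if h = g then 1 else 0"]) simp
qed

lemma zspan_add: assumes "a \<in> zspan G" "b \<in> zspan G" shows "a + b \<in> zspan G"
proof -
  obtain c1 c2 where "a = (\<Sum>h\<in>G. of_int (c1 h) * h)" "b = (\<Sum>h\<in>G. of_int (c2 h) * h)"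
    using assms unfolding zspan_def by blast
  then have "a + b = (\<Sum>h\<in>G. of_int (c1 h + c2 h) * h)"
    by (simp add: sum.distrib distrib_right)
  then show ?thesis unfolding zspan_def by (intro CollectI exI[of _ "\<lambda>h. c1 h + c2 h"])
qed

lemma zspan_smult: assumes "a \<in> zspan G" shows "of_int k * a \<in> zspan G"
proof -
  obtain c1 where "a = (\<Sum>h\<in>G. of_int (c1 h) * h)"
    using assms unfolding zspan_def by blast
  then have "of_int k * a = (\<Sum>h\<in>G. of_int (k * c1 h) * h)"
    by (simp add: sum_distrib_left mult.assoc)
  then show ?thesis unfolding zspan_def by (intro CollectI exI[of _ "\<lambda>h. k * c1 h"])
qed

lemma zspan_sum: assumes "finite I" "\<And>i. i \<in> I \<Longrightarrow> f i \<in> zspan G" shows "sum f I \<in> zspan G"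
  using assms by (induction I rule: finite_induct) (auto intro: zspan_0 zspan_add)

lemma zspan_mult_closed:
  assumes "finite G" "\<forall>g\<in>G. x * g \<in> zspan G" "z \<in> zspan G"
  shows "x * z \<in> zspan G"
proof -
  obtain c where z: "z = (\<Sum>h\<in>G. of_int (c h) * h)" using assms unfolding zspan_def by blast
  have "x * z = (\<Sum>h\<in>G. of_int (c h) * (x * h))" unfolding z
    by (simp add: sum_distrib_left algebra_simps)
  also have "\<dots> \<in> zspan G" using assms by (intro zspan_sum zspan_smult) auto
  finally show ?thesis .
qed

lemma alg_int_from_zspan:
  assumes "finite G" "\<exists>g\<in>G. g \<noteq> 0" "\<forall>g\<in>G. x * g \<in> zspan G"
  shows "algebraic_int x"
proof -
  obtain gs where gs: "set gs = G" "distinct gs" using finite_distinct_list[OF assms(1)] by blast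
  have sumconv: "(\<Sum>h\<in>G. f h) = (\<Sum>j<length gs. f (gs!j))" for f :: "complex \<Rightarrow> complex"
  proof -
    have "(\<Sum>h\<in>G. f h) = sum_list (map f gs)"
      using gs by (simp add: sum_list_distinct_conv_sum_set)
    also have "\<dots> = (\<Sum>j<length gs. f (gs!j))"
      by (simp add: sum_list_sum_nth lessThan_atLeast0)
    finally show ?thesis .
  qed
  show ?thesis
  proof (rule alg_int_from_matrix[of gs])
    show "\<exists>g\<in>set gs. g \<noteq> 0" using assms gs by auto
    show "\<forall>i<length gs. \<exists>c. x * gs ! i = (\<Sum>j<length gs. of_int (c j) * gs ! j)"
    proof (intro allI impI)
      fix i assume "i < length gs"
      then have "gs!i \<in> G" using gs by auto
      then obtain c where "x * gs!i = (\<Sum>h\<in>G. of_int (c h) * h)" using assms unfolding zspan_def by blast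
      then have "x * gs!i = (\<Sum>j<length gs. of_int (c (gs!j)) * gs!j)" using sumconv by simp
      then show "\<exists>c. x * gs ! i = (\<Sum>j<length gs. of_int (c j) * gs ! j)" by (intro exI[of _ "\<lambda>j. c (gs!j)"])
    qed
  qed
qed

lemma monic_root_power:
  fixes x :: complex
  assumes "poly (of_int_poly p) x = 0" "monic p"
  shows "x ^ degree p = - (\<Sum>i<degree p. of_int (coeff p i) * x ^ i)"
proof -
  have "0 = (\<Sum>i\<le>degree p. of_int (coeff p i) * x ^ i)"
    using assms(1) by (simp add: poly_altdef degree_map_poly)
  also have "\<dots> = (\<Sum>i<degree p. of_int (coeff p i) * x ^ i) + x ^ degree p"
    using assms(2) by (simp add: lessThan_Suc_atMost[symmetric])
  finally show ?thesis by (simp add: eq_neg_iff_add_eq_0 add.commute)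
qed

lemma algebraic_int_mult_add:
  fixes x y :: complex
  assumes "algebraic_int x" "algebraic_int y"
  shows "algebraic_int (x * y) \<and> algebraic_int (x + y)"
proof -
  obtain p where p: "poly (of_int_poly p) x = 0" "monic p" using assms(1) unfolding algebraic_int_altdef_ipoly by blast
  obtain q where q: "poly (of_int_poly q) y = 0" "monic q" using assms(2) unfolding algebraic_int_altdef_ipoly by blast
  define a where "a = degree p"
  define b where "b = degree q"
  have a: "a > 0"
  proof (rule ccontr)
    assume "\<not> a > 0" then have "degree p = 0" unfolding a_def by simp
    then have "p = 1" using p(2) by (metis monic_degree_0)
    then show False using p(1) by simp
  qed
  have b: "b > 0"
  proof (rule ccontr)
    assume "\<not> b > 0" then have "degree q = 0" unfolding b_def by simp
    then have "q = 1" using q(2) by (metis monic_degree_0)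
    then show False using q(1) by simp
  qed
  define G where "G = (\<lambda>(i,j). x^i * y^j) ` ({..<a} \<times> {..<b})"
  have finG: "finite G" unfolding G_def by simp
  have inG: "x^i * y^j \<in> zspan G" if "i < a" "j < b" for i j
    using that by (intro zspan_gen finG) (auto simp: G_def)
  have xa: "x^a = - (\<Sum>i<a. of_int (coeff p i) * x ^ i)" using monic_root_power[OF p] a_def by simp
  have yb: "y^b = - (\<Sum>i<b. of_int (coeff q i) * y ^ i)" using monic_root_power[OF q] b_def by simp
  have xg: "x * g \<in> zspan G" if "g \<in> G" for g
  proof -
    obtain i j where ij: "i < a" "j < b" "g = x^i * y^j" using \<open>g \<in> G\<close> unfolding G_def by auto
    show ?thesis
    proof (cases "Suc i < a")
      case True
      then show ?thesis using ij inG[of "Suc i" j] by (simp add: mult.assoc)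
    next
      case False
      then have "Suc i = a" using ij by simp
      have "x * g = x^(Suc i) * y^j" using ij(3) by (simp add: mult.assoc)
      also have "\<dots> = x^a * y^j" using \<open>Suc i = a\<close> by simp
      finally have "x * g = x^a * y^j" .
      also have "\<dots> = (\<Sum>k<a. of_int (- coeff p k) * (x ^ k * y^j))"
        unfolding xa by (simp add: sum_distrib_right mult.assoc sum_negf)
      also have "\<dots> \<in> zspan G" using ij by (intro zspan_sum zspan_smult inG) auto
      finally show ?thesis .
    qed
  qed
  have yg: "y * g \<in> zspan G" if "g \<in> G" for g
  proof -
    obtain i j where ij: "i < a" "j < b" "g = x^i * y^j" using \<open>g \<in> G\<close> unfolding G_def by auto
    show ?thesis
    proof (cases "Suc j < b")
      case True
      then show ?thesis using ij inG[of i "Suc j"] by (simp add: algebra_simps)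
    next
      case False
      then have "Suc j = b" using ij by simp
      have "y * g = x^i * y^(Suc j)" using ij(3) by (simp add: algebra_simps)
      also have "\<dots> = x^i * y^b" using \<open>Suc j = b\<close> by simp
      finally have "y * g = x^i * y^b" .
      also have "\<dots> = (\<Sum>k<b. of_int (- coeff q k) * (x ^ i * y^k))"
        unfolding yb by (simp add: sum_distrib_left algebra_simps sum_negf)
      also have "\<dots> \<in> zspan G" using ij by (intro zspan_sum zspan_smult inG) auto
      finally show ?thesis .
    qed
  qed
  have "1 \<in> G" unfolding G_def using a b by (intro image_eqI[of _ _ "(0,0)"]) auto
  then have nz: "\<exists>g\<in>G. g \<noteq> 0" by (intro bexI[of _ 1]) auto
  have "algebraic_int (x * y)"
  proof (rule alg_int_from_zspan[OF finG nz], intro ballI)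
    fix g assume "g \<in> G"
    then have "x * (y * g) \<in> zspan G" using zspan_mult_closed[OF finG] xg yg by blast
    then show "x * y * g \<in> zspan G" by (simp add: mult.assoc)
  qed
  moreover have "algebraic_int (x + y)"
  proof (rule alg_int_from_zspan[OF finG nz], intro ballI)
    fix g assume "g \<in> G"
    then show "(x + y) * g \<in> zspan G" using xg yg zspan_add by (simp add: distrib_right)
  qed
  ultimately show ?thesis by blast
qed

lemma O_iff: "x \<in> \<O> F \<longleftrightarrow> x \<in> F \<and> algebraic_int x"
  by (simp add: ints_def)

locale nf =
  fixes F :: "complex set" and \<delta> :: complex
  assumes nfF: "number_field F" and dg: "different_generator F \<delta>"
begin

lemma sub: "subfield_C F" using nfF unfolding number_field_def by blast

lemma F_0[simp, intro]: "0 \<in> F" and F_1[simp, intro]: "1 \<in> F"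
  using sub unfolding subfield_C_def by auto

lemma F_add[intro]: "x \<in> F \<Longrightarrow> y \<in> F \<Longrightarrow> x + y \<in> F"
  and F_mult[intro]: "x \<in> F \<Longrightarrow> y \<in> F \<Longrightarrow> x * y \<in> F"
  and F_uminus[intro]: "x \<in> F \<Longrightarrow> - x \<in> F"
  using sub unfolding subfield_C_def by auto

lemma F_inverse[intro]: "x \<in> F \<Longrightarrow> inverse x \<in> F"
  using sub unfolding subfield_C_def by (cases "x = 0") auto

lemma F_diff[intro]: "x \<in> F \<Longrightarrow> y \<in> F \<Longrightarrow> x - y \<in> F"
  using F_add F_uminus by (metis diff_conv_add_uminus)

lemma F_divide[intro]: "x \<in> F \<Longrightarrow> y \<in> F \<Longrightarrow> x / y \<in> F"
  using F_mult F_inverse by (simp add: divide_inverse)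

lemma F_of_nat[intro]: "of_nat n \<in> F"
  by (induction n) (auto simp: F_add)

lemma F_of_int[intro]: "of_int k \<in> F"
proof (cases "k \<ge> 0")
  case True then show ?thesis using F_of_nat[of "nat k"] by simp
next
  case False then show ?thesis using F_uminus[OF F_of_nat[of "nat (-k)"]] by simp
qed

lemma F_of_rat[intro]: "of_rat r \<in> F"
proof -
  obtain a b where "r = Rat.Fract a b" "b > 0" by (cases r) auto
  then show ?thesis by (auto simp: of_rat_rat)
qed

lemma F_sum[intro]: "(\<And>i. i \<in> I \<Longrightarrow> f i \<in> F) \<Longrightarrow> sum f I \<in> F"
  by (induction I rule: infinite_finite_induct) auto

lemma F_power[intro]: "x \<in> F \<Longrightarrow> x ^ n \<in> F"
  by (induction n) auto

lemma F_prod[intro]: "(\<And>i. i \<in> I \<Longrightarrow> f i \<in> F) \<Longrightarrow> prod f I \<in> F"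
  by (induction I rule: infinite_finite_induct) auto

lemma O_F[intro]: "x \<in> \<O> F \<Longrightarrow> x \<in> F" by (simp add: O_iff)

lemma O_0[simp, intro]: "0 \<in> \<O> F" and O_1[simp, intro]: "1 \<in> \<O> F"
  by (auto simp: O_iff)

lemma O_add[intro]: "x \<in> \<O> F \<Longrightarrow> y \<in> \<O> F \<Longrightarrow> x + y \<in> \<O> F"
  and O_mult[intro]: "x \<in> \<O> F \<Longrightarrow> y \<in> \<O> F \<Longrightarrow> x * y \<in> \<O> F"
  using algebraic_int_mult_add by (auto simp: O_iff)

lemma O_uminus[intro]: "x \<in> \<O> F \<Longrightarrow> - x \<in> \<O> F"
  by (auto simp: O_iff)

lemma O_diff[intro]: "x \<in> \<O> F \<Longrightarrow> y \<in> \<O> F \<Longrightarrow> x - y \<in> \<O> F"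
  using O_add O_uminus by (metis diff_conv_add_uminus)

lemma O_of_int[intro]: "of_int k \<in> \<O> F"
  by (auto simp: O_iff)

lemma O_of_nat[intro]: "of_nat k \<in> \<O> F"
  by (auto simp: O_iff)

lemma O_sum[intro]: "(\<And>i. i \<in> I \<Longrightarrow> f i \<in> \<O> F) \<Longrightarrow> sum f I \<in> \<O> F"
  by (induction I rule: infinite_finite_induct) auto

lemma O_prod[intro]: "(\<And>i. i \<in> I \<Longrightarrow> f i \<in> \<O> F) \<Longrightarrow> prod f I \<in> \<O> F"
  by (induction I rule: infinite_finite_induct) auto

lemma O_power[intro]: "x \<in> \<O> F \<Longrightarrow> x ^ n \<in> \<O> F"
  by (induction n) auto

lemma delta_O: "\<delta> \<in> \<O> F" and delta_nz: "\<delta> \<noteq> 0"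
  using dg unfolding different_generator_def by auto

lemma delta_F: "\<delta> \<in> F" using delta_O by auto

lemma invdiff: "inv_different F = {x / \<delta> | x. x \<in> \<O> F}"
  using dg unfolding different_generator_def by auto

lemma emb_1: "\<sigma> \<in> embeddings F \<Longrightarrow> \<sigma> 1 = 1"
  and emb_add: "\<sigma> \<in> embeddings F \<Longrightarrow> x \<in> F \<Longrightarrow> y \<in> F \<Longrightarrow> \<sigma> (x + y) = \<sigma> x + \<sigma> y"
  and emb_mult: "\<sigma> \<in> embeddings F \<Longrightarrow> x \<in> F \<Longrightarrow> y \<in> F \<Longrightarrow> \<sigma> (x * y) = \<sigma> x * \<sigma> y"
  and emb_out: "\<sigma> \<in> embeddings F \<Longrightarrow> x \<notin> F \<Longrightarrow> \<sigma> x = 0"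
  unfolding embeddings_def by auto

lemma emb_0: assumes "\<sigma> \<in> embeddings F" shows "\<sigma> 0 = 0"
proof -
  have "\<sigma> (0 + 0) = \<sigma> 0 + \<sigma> 0" using emb_add[OF assms, of 0 0] by simp
  then show ?thesis by simp
qed

lemma emb_uminus: assumes "\<sigma> \<in> embeddings F" "x \<in> F" shows "\<sigma> (- x) = - \<sigma> x"
proof -
  have "\<sigma> (x + - x) = \<sigma> x + \<sigma> (- x)" using emb_add[OF assms(1), of x "-x"] assms(2) F_uminus by blast
  then have "\<sigma> x + \<sigma> (- x) = 0" using emb_0[OF assms(1)] by simp
  then show ?thesis by (simp add: eq_neg_iff_add_eq_0 add.commute)
qed

lemma emb_of_nat: assumes "\<sigma> \<in> embeddings F" shows "\<sigma> (of_nat n) = of_nat n"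
proof (induction n)
  case 0 then show ?case using emb_0[OF assms] by simp
next
  case (Suc n)
  have "\<sigma> (of_nat (Suc n)) = \<sigma> (1 + of_nat n)" by simp
  also have "\<dots> = \<sigma> 1 + \<sigma> (of_nat n)" using emb_add[OF assms] by auto
  finally show ?case using Suc emb_1[OF assms] by simp
qed

lemma emb_of_int: assumes "\<sigma> \<in> embeddings F" shows "\<sigma> (of_int k) = of_int k"
proof (cases "k \<ge> 0")
  case True then show ?thesis using emb_of_nat[OF assms, of "nat k"] by simp
next
  case False
  then have "(of_int k :: complex) = - of_nat (nat (-k))" by simp
  then show ?thesis using emb_uminus[OF assms, of "of_nat (nat (-k))"] emb_of_nat[OF assms, of "nat (-k)"]
    by auto
qed

lemma emb_inverse: assumes "\<sigma> \<in> embeddings F" "x \<in> F" "x \<noteq> 0"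
  shows "\<sigma> (inverse x) = inverse (\<sigma> x)"
proof -
  have "\<sigma> (x * inverse x) = \<sigma> x * \<sigma> (inverse x)" using emb_mult[OF assms(1)] assms(2) by auto
  then have "\<sigma> x * \<sigma> (inverse x) = 1" using assms emb_1[OF assms(1)] by simp
  then show ?thesis by (metis inverse_unique)
qed

lemma emb_of_rat: assumes "\<sigma> \<in> embeddings F" shows "\<sigma> (of_rat r) = of_rat r"
proof -
  obtain a b where ab: "r = Rat.Fract a b" "b > 0" by (cases r) auto
  then have "(of_rat r :: complex) = of_int a * inverse (of_int b)" by (simp add: of_rat_rat divide_inverse)
  moreover have "\<sigma> (of_int a * inverse (of_int b)) = \<sigma> (of_int a) * \<sigma> (inverse (of_int b))"
    using emb_mult[OF assms] F_of_int F_inverse by blast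
  moreover have "\<sigma> (inverse (of_int b)) = inverse (\<sigma> (of_int b))"
    using emb_inverse[OF assms, of "of_int b"] F_of_int ab(2) by simp
  ultimately show ?thesis using emb_of_int[OF assms] by simp
qed

lemma emb_sum: assumes "\<sigma> \<in> embeddings F" "\<And>i. i \<in> I \<Longrightarrow> f i \<in> F"
  shows "\<sigma> (sum f I) = (\<Sum>i\<in>I. \<sigma> (f i))"
  using assms(2)
proof (induction I rule: infinite_finite_induct)
  case (infinite A) then show ?case using emb_0[OF assms(1)] by simp
next
  case empty then show ?case using emb_0[OF assms(1)] by simp
next
  case (insert x A)
  have "\<sigma> (sum f (insert x A)) = \<sigma> (f x + sum f A)" using insert by simp
  also have "\<dots> = \<sigma> (f x) + \<sigma> (sum f A)" using insert F_sum by (intro emb_add[OF assms(1)]) auto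
  finally show ?case using insert by simp
qed

lemma id_emb: "(\<lambda>x. if x \<in> F then x else 0) \<in> embeddings F"
  unfolding embeddings_def by auto

lemma trace_inf_zero: "infinite (embeddings F) \<Longrightarrow> trace F x = 0"
  unfolding trace_def by simp

lemma half_not_O: "(1/2 :: complex) \<notin> \<O> F"
proof
  assume "(1/2 :: complex) \<in> \<O> F"
  then have "algebraic_int (1/2 :: complex)" by (simp add: O_iff)
  moreover have "(1/2 :: complex) \<in> \<rat>" by (metis Rats_divide Rats_1 Rats_number_of numeral_One)
  ultimately have "(1/2 :: complex) \<in> \<int>" by (rule rational_algebraic_int_is_int)
  then obtain k where k: "(1/2 :: complex) = of_int k" by (elim Ints_cases)
  then have "(1::complex) = 2 * of_int k" by (simp add: field_simps)
  then have "(1::int) = 2 * k" by (metis of_int_1 of_int_eq_iff of_int_mult of_int_numeral)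
  then show False by presburger
qed

lemma emb_finite: "finite (embeddings F)"
proof (rule ccontr)
  assume inf: "infinite (embeddings F)"
  have "2 * \<delta> \<in> F" using F_mult[of 2 \<delta>] F_of_nat[of 2] delta_F by simp
  then have "1 / (2 * \<delta>) \<in> F" by (rule F_divide[OF F_1])
  then have "1 / (2 * \<delta>) \<in> inv_different F"
    unfolding inv_different_def using trace_inf_zero[OF inf] by auto
  then obtain x where x: "x \<in> \<O> F" "1 / (2 * \<delta>) = x / \<delta>" unfolding invdiff by blast
  then have "x = 1/2" using delta_nz by (simp add: field_simps)
  then show False using x(1) half_not_O by (simp only:)
qed

lemma emb_card: "card (embeddings F) > 0"
  using emb_finite id_emb by (metis card_gt_0_iff empty_iff)

lemma trace_add: "x \<in> F \<Longrightarrow> y \<in> F \<Longrightarrow> trace F (x + y) = trace F x + trace F y"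
  unfolding trace_def by (simp add: emb_add sum.distrib)

lemma trace_rat_mult: "x \<in> F \<Longrightarrow> trace F (of_rat r * x) = of_rat r * trace F x"
  unfolding trace_def by (simp add: emb_mult emb_of_rat F_of_rat sum_distrib_left)

lemma trace_int_mult: "x \<in> F \<Longrightarrow> trace F (of_int k * x) = of_int k * trace F x"
  unfolding trace_def by (simp add: emb_mult emb_of_int F_of_int sum_distrib_left)

lemma trace_uminus: "x \<in> F \<Longrightarrow> trace F (- x) = - trace F x"
  unfolding trace_def by (simp add: emb_uminus sum_negf)

lemma trace_diff: "x \<in> F \<Longrightarrow> y \<in> F \<Longrightarrow> trace F (x - y) = trace F x - trace F y"
  using trace_add[of x "-y"] trace_uminus[of y] by auto

lemma trace_sum: "(\<And>i. i \<in> I \<Longrightarrow> f i \<in> F) \<Longrightarrow> trace F (sum f I) = (\<Sum>i\<in>I. trace F (f i))"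
  unfolding trace_def by (simp add: emb_sum sum.swap[of _ "embeddings F"])

lemma trace_1: "trace F 1 = of_nat (card (embeddings F))"
  unfolding trace_def by (simp add: emb_1)

lemma trace_nondeg: assumes "x \<in> F" "x \<noteq> 0" shows "trace F (x * inverse x) \<noteq> 0"
  using assms trace_1 emb_card by simp

lemma O_trace: assumes "x \<in> \<O> F" "y \<in> \<O> F" shows "trace F (x * y) \<in> \<int>"
proof -
  have "\<delta> * x \<in> \<O> F" using assms delta_O by auto
  then have "(\<delta> * x) / \<delta> \<in> inv_different F" unfolding invdiff by blast
  then have "x \<in> inv_different F" using delta_nz by simp
  then show ?thesis using assms unfolding inv_different_def by auto
qed

lemma O_div_delta_trace: assumes "x \<in> \<O> F" "y \<in> \<O> F" shows "trace F (x / \<delta> * y) \<in> \<int>"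
proof -
  have "x / \<delta> \<in> inv_different F" unfolding invdiff using assms by blast
  then show ?thesis using assms unfolding inv_different_def by auto
qed

lemma trace_dual: assumes "z \<in> F" "\<And>y. y \<in> \<O> F \<Longrightarrow> trace F (z * y) \<in> \<int>" shows "\<delta> * z \<in> \<O> F"
proof -
  have "z \<in> inv_different F" unfolding inv_different_def using assms by auto
  then obtain x where "x \<in> \<O> F" "z = x / \<delta>" unfolding invdiff by blast
  then show ?thesis using delta_nz by simp
qed

end

interpretation Qv: vector_space "\<lambda>(r::rat) (x::complex). of_rat r * x"
  by unfold_locales (auto simp: algebra_simps of_rat_add of_rat_mult)

lemma rat_denom_mult_int:
  assumes "snd (quotient_of r) dvd N"
  shows "\<exists>k::int. of_int N * r = of_int k"
proof -
  obtain a b where ab: "quotient_of r = (a, b)" by (cases "quotient_of r")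
  then have r: "r = of_int a / of_int b" by (rule quotient_of_div)
  have bpos: "b > 0" using ab by (rule quotient_of_denom_pos)
  obtain m where m: "N = b * m" using assms ab by (auto elim: dvdE)
  have "of_int N * r = of_int (m * a)" using bpos unfolding r m by (simp add: field_simps)
  then show ?thesis by blast
qed

context nf
begin

lemma dvdO_refl: "a \<in> \<O> F \<Longrightarrow> dvdO F a a"
  unfolding dvdO_def by (rule bexI[of _ 1]) auto

lemma dvdO_0: "dvdO F a 0"
  unfolding dvdO_def by (rule bexI[of _ 0]) auto

lemma dvdO_add: assumes "dvdO F a b" "dvdO F a c" shows "dvdO F a (b + c)"
proof -
  obtain k k' where "k \<in> \<O> F" "b = a * k" "k' \<in> \<O> F" "c = a * k'" using assms unfolding dvdO_def by blast
  then show ?thesis unfolding dvdO_def by (intro bexI[of _ "k + k'"]) (auto simp: distrib_left)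
qed

lemma dvdO_uminus: "dvdO F a b \<Longrightarrow> dvdO F a (- b)"
  unfolding dvdO_def by (auto intro!: bexI[of _ "- k" for k])

lemma dvdO_diff: "dvdO F a b \<Longrightarrow> dvdO F a c \<Longrightarrow> dvdO F a (b - c)"
  using dvdO_add[of a b "- c"] dvdO_uminus[of a c] by simp

lemma dvdO_mult: "dvdO F a b \<Longrightarrow> c \<in> \<O> F \<Longrightarrow> dvdO F a (b * c)"
  unfolding dvdO_def by (auto simp: mult.assoc intro!: bexI)

lemma dvdO_mult_left: "dvdO F a b \<Longrightarrow> c \<in> \<O> F \<Longrightarrow> dvdO F a (c * b)"
  using dvdO_mult by (simp add: mult.commute)

lemma dvdO_trans: "dvdO F a b \<Longrightarrow> dvdO F b c \<Longrightarrow> dvdO F a c"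
  unfolding dvdO_def by (auto simp: mult.assoc intro!: bexI)

lemma dvdO_1: "x \<in> \<O> F \<Longrightarrow> dvdO F 1 x"
  unfolding dvdO_def by auto

lemma dvdO_sum: "(\<And>i. i \<in> I \<Longrightarrow> dvdO F a (f i)) \<Longrightarrow> dvdO F a (sum f I)"
  by (induction I rule: infinite_finite_induct) (auto intro: dvdO_0 dvdO_add)

lemma congO_iff: "(x, y) \<in> congO F q \<longleftrightarrow> x \<in> \<O> F \<and> y \<in> \<O> F \<and> dvdO F q (x - y)"
  unfolding congO_def by simp

lemma equiv_congO: assumes "q \<in> \<O> F" shows "equiv (\<O> F) (congO F q)"
proof (rule equivI)
  show "congO F q \<subseteq> \<O> F \<times> \<O> F" unfolding congO_def by auto
  show "refl_on (\<O> F) (congO F q)"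
    unfolding refl_on_def congO_def using dvdO_0 by auto
  show "sym (congO F q)"
    unfolding sym_def congO_def using dvdO_uminus by fastforce
  show "trans (congO F q)"
    unfolding trans_def congO_def
  proof (clarsimp)
    fix x y z assume "x \<in> \<O> F" "y \<in> \<O> F" "z \<in> \<O> F" "dvdO F q (x - y)" "dvdO F q (y - z)"
    then show "dvdO F q (x - z)" using dvdO_add[of q "x - y" "y - z"] by simp
  qed
qed

lemma span_B: obtains B where "finite B" "B \<subseteq> F" "\<forall>x\<in>F. \<exists>c. x = (\<Sum>b\<in>B. of_rat (c b) * b)"
  using nfF unfolding number_field_def by blast

lemma scale_to_O: assumes "x \<in> F" shows "\<exists>N::int. N > 0 \<and> of_int N * x \<in> \<O> F"
proof -
  obtain B where B: "finite B" "B \<subseteq> F" "\<forall>x\<in>F. \<exists>c. x = (\<Sum>b\<in>B. of_rat (c b) * b)"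
    by (rule span_B)
  define C where "C b = (SOME c. x * b = (\<Sum>b'\<in>B. of_rat (c b') * b'))" for b
  have C: "x * b = (\<Sum>b'\<in>B. of_rat (C b b') * b')" if "b \<in> B" for b
  proof -
    have "x * b \<in> F" using assms that B(2) by auto
    then have "\<exists>c. x * b = (\<Sum>b'\<in>B. of_rat (c b') * b')" using B(3) by blast
    then show ?thesis unfolding C_def by (rule someI_ex)
  qed
  define N where "N = (\<Prod>p\<in>B\<times>B. snd (quotient_of (C (fst p) (snd p))))"
  have Npos: "N > 0" unfolding N_def by (intro prod_pos) (auto simp: quotient_of_denom_pos')
  have Nint: "\<exists>k::int. of_int N * C b b' = of_int k" if "b \<in> B" "b' \<in> B" for b b'
  proof (rule rat_denom_mult_int)
    show "snd (quotient_of (C b b')) dvd N"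
      unfolding N_def using that B(1)
      by (intro dvd_prodI[where f = "\<lambda>p. snd (quotient_of (C (fst p) (snd p)))" and a = "(b, b')", simplified]) auto
  qed
  define K where "K b b' = (SOME k::int. of_int N * C b b' = of_int k)" for b b'
  have K: "of_int N * C b b' = of_int (K b b')" if "b \<in> B" "b' \<in> B" for b b'
    unfolding K_def using Nint[OF that] by (rule someI_ex)
  have nz: "\<exists>g\<in>B. g \<noteq> 0"
  proof (rule ccontr)
    assume "\<not> (\<exists>g\<in>B. g \<noteq> 0)"
    then have "\<forall>c. (\<Sum>b\<in>B. of_rat (c b) * b) = (0::complex)" by (intro allI sum.neutral) auto
    moreover obtain c where "1 = (\<Sum>b\<in>B. of_rat (c b) * b)" using B(3) F_1 by blast
    ultimately show False by simp
  qed
  have "algebraic_int (of_int N * x)"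
  proof (rule alg_int_from_zspan[OF B(1) nz], intro ballI)
    fix b assume b: "b \<in> B"
    have "of_int N * x * b = (\<Sum>b'\<in>B. of_int N * of_rat (C b b') * b')"
      using C[OF b] by (simp add: sum_distrib_left mult.assoc)
    also have "\<dots> = (\<Sum>b'\<in>B. of_int (K b b') * b')"
    proof (rule sum.cong[OF refl])
      fix b' assume b': "b' \<in> B"
      have "(of_int N * of_rat (C b b') :: complex) = of_rat (of_int N * C b b')" by (simp add: of_rat_mult)
      also have "\<dots> = of_int (K b b')" using K[OF b b'] by simp
      finally show "of_int N * of_rat (C b b') * b' = of_int (K b b') * b'" by simp
    qed
    finally show "of_int N * x * b \<in> zspan B" unfolding zspan_def by (intro CollectI exI[of _ "K b"])
  qed
  then show ?thesis using Npos assms by (auto simp: O_iff)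
qed

lemma basis_exists: "\<exists>E. finite E \<and> E \<subseteq> \<O> F \<and> Qv.independent E \<and> F \<subseteq> Qv.span E"
proof -
  obtain B where B: "finite B" "B \<subseteq> F" "\<forall>x\<in>F. \<exists>c. x = (\<Sum>b\<in>B. of_rat (c b) * b)"
    by (rule span_B)
  define N where "N b = (SOME N::int. N > 0 \<and> of_int N * b \<in> \<O> F)" for b
  have N: "N b > 0 \<and> of_int (N b) * b \<in> \<O> F" if "b \<in> B" for b
  proof -
    have "\<exists>N::int. N > 0 \<and> of_int N * b \<in> \<O> F" using scale_to_O[of b] that B(2) by blast
    then show ?thesis unfolding N_def by (rule someI_ex)
  qed
  define S where "S = (\<lambda>b. of_int (N b) * b) ` B"
  have S: "finite S" "S \<subseteq> \<O> F" unfolding S_def using B(1) N by auto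
  have BS: "B \<subseteq> Qv.span S"
  proof
    fix b assume b: "b \<in> B"
    have "of_int (N b) * b \<in> Qv.span S" unfolding S_def using b by (intro Qv.span_base) auto
    then have "of_rat (1 / of_int (N b)) * (of_int (N b) * b) \<in> Qv.span S" by (rule Qv.span_scale)
    moreover have "of_rat (1 / of_int (N b)) * (of_int (N b) * b) = b" using N[OF b]
      by (simp add: of_rat_divide)
    ultimately show "b \<in> Qv.span S" by simp
  qed
  have FB: "F \<subseteq> Qv.span B"
  proof
    fix x assume "x \<in> F"
    then obtain c where "x = (\<Sum>b\<in>B. of_rat (c b) * b)" using B(3) by blast
    then show "x \<in> Qv.span B" unfolding Qv.span_finite[OF B(1)] by (intro image_eqI[OF _ UNIV_I, of _ _ c]) simp
  qed
  have "Qv.span B \<subseteq> Qv.span S" by (rule Qv.span_minimal[OF BS Qv.subspace_span])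
  then have FS: "F \<subseteq> Qv.span S" using FB by blast
  obtain E where E: "E \<subseteq> S" "Qv.independent E" "S \<subseteq> Qv.span E"
    by (rule Qv.maximal_independent_subset)
  have "Qv.span S \<subseteq> Qv.span E" by (rule Qv.span_minimal[OF E(3) Qv.subspace_span])
  then have "F \<subseteq> Qv.span E" using FS by auto
  moreover have "finite E" using E(1) S(1) finite_subset by blast
  ultimately show ?thesis using E S by (intro exI[of _ E]) auto
qed

end

context nf
begin

lemma es_ex: "\<exists>es. distinct es \<and> set es \<subseteq> \<O> F \<and> Qv.independent (set es) \<and> F \<subseteq> Qv.span (set es)"
proof -
  obtain E where E: "finite E" "E \<subseteq> \<O> F" "Qv.independent E" "F \<subseteq> Qv.span E"
    using basis_exists by blast
  obtain es where "set es = E" "distinct es" using finite_distinct_list[OF E(1)] by blast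
  then show ?thesis using E by blast
qed

definition es where
  "es = (SOME es. distinct es \<and> set es \<subseteq> \<O> F \<and> Qv.independent (set es) \<and> F \<subseteq> Qv.span (set es))"

lemma es_props: "distinct es \<and> set es \<subseteq> \<O> F \<and> Qv.independent (set es) \<and> F \<subseteq> Qv.span (set es)"
  unfolding es_def using es_ex by (rule someI_ex)

abbreviation "nb \<equiv> length es"

lemma sum_set_es: "(\<Sum>v\<in>set es. f v) = (\<Sum>i<nb. f (es!i))"
proof -
  have "(\<Sum>v\<in>set es. f v) = sum_list (map f es)"
    using es_props by (simp add: sum_list_distinct_conv_sum_set)
  also have "\<dots> = (\<Sum>i<nb. f (es!i))"
    by (simp add: sum_list_sum_nth lessThan_atLeast0)
  finally show ?thesis .
qed

lemma es_O: "i < nb \<Longrightarrow> es!i \<in> \<O> F"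
  using es_props by auto

lemma es_F: "i < nb \<Longrightarrow> es!i \<in> F"
  using es_O by auto

lemma es_span: assumes "x \<in> F" shows "\<exists>r. x = (\<Sum>i<nb. of_rat (r i) * es!i)"
proof -
  have "x \<in> Qv.span (set es)" using es_props assms by auto
  then obtain u where "x = (\<Sum>v\<in>set es. of_rat (u v) * v)"
    unfolding Qv.span_finite[OF finite_set] by auto
  then have "x = (\<Sum>i<nb. of_rat (u (es!i)) * es!i)" by (simp add: sum_set_es)
  then show ?thesis by (intro exI[of _ "\<lambda>i. u (es!i)"])
qed

lemma es_indep: assumes "(\<Sum>i<nb. of_rat (r i) * es!i) = 0" "i < nb" shows "r i = 0"
proof -
  define u where "u v = r (THE i. i < nb \<and> es!i = v)" for v
  have u: "u (es!i) = r i" if "i < nb" for i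
  proof -
    have "(THE i'. i' < nb \<and> es!i' = es!i) = i"
      using that es_props by (intro the_equality) (auto simp: nth_eq_iff_index_eq)
    then show ?thesis unfolding u_def by simp
  qed
  have "(\<Sum>v\<in>set es. of_rat (u v) * v) = (\<Sum>i<nb. of_rat (u (es!i)) * es!i)" by (simp add: sum_set_es)
  also have "\<dots> = (\<Sum>i<nb. of_rat (r i) * es!i)" using u by (intro sum.cong) auto
  finally have "(\<Sum>v\<in>set es. of_rat (u v) * v) = 0" using assms(1) by simp
  then have "\<forall>v\<in>set es. u v = 0" using es_props Qv.dependent_finite[OF finite_set, of es] by auto
  then show ?thesis using u[OF assms(2)] assms(2) by auto
qed

definition tr_int where "tr_int z = (SOME k::int. trace F z = of_int k)"

lemma tr_int: assumes "x \<in> \<O> F" "y \<in> \<O> F" shows "trace F (x * y) = of_int (tr_int (x * y))"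
proof -
  have "trace F (x * y) \<in> \<int>" using O_trace[OF assms] .
  then have "\<exists>k::int. trace F (x * y) = of_int k" by (elim Ints_cases) auto
  then show ?thesis unfolding tr_int_def by (rule someI_ex)
qed

lemma es_nondeg: assumes "w \<in> F" "\<And>j. j < nb \<Longrightarrow> trace F (w * es!j) = 0" shows "w = 0"
proof (rule ccontr)
  assume w0: "w \<noteq> 0"
  have "inverse w \<in> F" using assms by auto
  then obtain r where r: "inverse w = (\<Sum>i<nb. of_rat (r i) * es!i)" using es_span by blast
  have "w * inverse w = (\<Sum>i<nb. of_rat (r i) * (w * es!i))"
    unfolding r by (simp add: sum_distrib_left algebra_simps)
  then have "trace F (w * inverse w) = (\<Sum>i<nb. trace F (of_rat (r i) * (w * es!i)))"
    using assms(1) es_F by (simp only:) (rule trace_sum, auto)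
  also have "\<dots> = (\<Sum>i<nb. of_rat (r i) * trace F (w * es!i))"
    using assms(1) es_F by (intro sum.cong refl trace_rat_mult) auto
  also have "\<dots> = 0" using assms(2) by simp
  finally show False using trace_nondeg[OF assms(1) w0] by simp
qed

definition TM :: "int mat" where "TM = mat nb nb (\<lambda>(i,j). tr_int (es!i * es!j))"

lemma TM_carrier: "TM \<in> carrier_mat nb nb" unfolding TM_def by simp

lemma TM_trace: "i < nb \<Longrightarrow> j < nb \<Longrightarrow> trace F (es!i * es!j) = of_int (TM $$ (i,j))"
  unfolding TM_def using tr_int es_O by simp

lemma det_TM: "det TM \<noteq> 0"
proof
  assume d0: "det TM = 0"
  define TQ :: "rat mat" where "TQ = of_int_hom.mat_hom TM"
  have TQc: "TQ \<in> carrier_mat nb nb" unfolding TQ_def using TM_carrier by simp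
  have "det TQ = of_int (det TM)" unfolding TQ_def by (rule of_int_hom.hom_det)
  then have "det TQ = 0" using d0 by simp
  then obtain v where v: "v \<in> carrier_vec nb" "v \<noteq> 0\<^sub>v nb" "TQ *\<^sub>v v = 0\<^sub>v nb"
    using det_0_iff_vec_prod_zero[OF TQc] by blast
  define y where "y = (\<Sum>i<nb. of_rat (v$i) * es!i)"
  have yF: "y \<in> F" unfolding y_def using es_F by (intro F_sum F_mult F_of_rat) auto
  have "trace F (y * es!j) = 0" if j: "j < nb" for j
  proof -
    have a: "(TQ *\<^sub>v v) $ j = (\<Sum>i<nb. of_int (TM $$ (j,i)) * v$i)"
      using j v(1) TQc TM_carrier unfolding TQ_def by (simp add: scalar_prod_def lessThan_atLeast0)
    have b: "(TQ *\<^sub>v v) $ j = 0" using v(3) j by simp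
    from a b have s0: "(\<Sum>i<nb. of_int (TM $$ (j,i)) * v$i) = (0::rat)" by simp
    have "y * es!j = (\<Sum>i<nb. of_rat (v$i) * (es!i * es!j))"
      unfolding y_def by (simp add: sum_distrib_right mult.assoc)
    then have "trace F (y * es!j) = (\<Sum>i<nb. trace F (of_rat (v$i) * (es!i * es!j)))"
      using es_F j by (simp only:) (rule trace_sum, auto)
    also have "\<dots> = (\<Sum>i<nb. of_rat (v$i) * trace F (es!i * es!j))"
      using es_F j by (intro sum.cong refl trace_rat_mult) auto
    also have "\<dots> = (\<Sum>i<nb. of_rat (v$i) * of_int (TM $$ (j,i)))"
    proof (rule sum.cong[OF refl])
      fix i assume "i \<in> {..<nb}"
      then have "trace F (es!i * es!j) = of_int (TM $$ (j,i))"
        using TM_trace[of j i] j by (simp add: mult.commute)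
      then show "of_rat (v$i) * trace F (es!i * es!j) = of_rat (v$i) * of_int (TM $$ (j,i))" by simp
    qed
    also have "\<dots> = of_rat (\<Sum>i<nb. of_int (TM $$ (j,i)) * v$i)"
      by (simp add: of_rat_sum of_rat_mult mult.commute)
    also have "\<dots> = 0" using s0 by simp
    finally show ?thesis .
  qed
  then have "y = 0" using es_nondeg[OF yF] by blast
  then have "\<forall>i<nb. v$i = 0" using es_indep[of "\<lambda>i. v$i"] unfolding y_def by blast
  then have "v = 0\<^sub>v nb" using v(1) by (intro eq_vecI) auto
  then show False using v(2) by simp
qed

definition DD where "DD = det TM"
definition AM where "AM = adj_mat TM"
definition gg where "gg k = (\<Sum>i<nb. of_int (AM $$ (k,i)) * es!i)"

lemma gg_O: "gg k \<in> \<O> F"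
  unfolding gg_def using es_O by (intro O_sum O_mult) auto

lemma DD_nz: "DD \<noteq> 0" unfolding DD_def using det_TM .

lemma trace_gg: assumes "k < nb" "j < nb"
  shows "trace F (gg k * es!j) = (if k = j then of_int DD else 0)"
proof -
  have AMc: "AM \<in> carrier_mat nb nb" unfolding AM_def using adj_mat(1)[OF TM_carrier] .
  have prod: "AM * TM = DD \<cdot>\<^sub>m 1\<^sub>m nb" unfolding AM_def DD_def using adj_mat(3)[OF TM_carrier] .
  have "(AM * TM) $$ (k,j) = (\<Sum>i<nb. AM $$ (k,i) * TM $$ (i,j))"
    using assms AMc TM_carrier by (simp add: scalar_prod_def lessThan_atLeast0)
  then have e: "(\<Sum>i<nb. AM $$ (k,i) * TM $$ (i,j)) = (if k = j then DD else 0)"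
    using prod assms by (cases "k = j") auto
  have "gg k * es!j = (\<Sum>i<nb. of_int (AM $$ (k,i)) * (es!i * es!j))"
    unfolding gg_def by (simp add: sum_distrib_right mult.assoc)
  then have "trace F (gg k * es!j) = (\<Sum>i<nb. trace F (of_int (AM $$ (k,i)) * (es!i * es!j)))"
    using es_F assms by (simp only:) (rule trace_sum, auto)
  also have "\<dots> = (\<Sum>i<nb. of_int (AM $$ (k,i)) * trace F (es!i * es!j))"
    using es_F assms by (intro sum.cong refl trace_int_mult) auto
  also have "\<dots> = (\<Sum>i<nb. of_int (AM $$ (k,i) * TM $$ (i,j)))"
    using TM_trace assms by (intro sum.cong refl) auto
  also have "\<dots> = of_int (\<Sum>i<nb. AM $$ (k,i) * TM $$ (i,j))" by simp
  also have "\<dots> = (if k = j then of_int DD else 0)" using e by simp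
  finally show ?thesis .
qed

lemma key_repr: assumes x: "x \<in> \<O> F"
  shows "of_int DD * x = (\<Sum>k<nb. of_int (tr_int (x * es!k)) * gg k)"
proof -
  define w where "w = of_int DD * x - (\<Sum>k<nb. of_int (tr_int (x * es!k)) * gg k)"
  have wF: "w \<in> F" unfolding w_def using x gg_O by (intro F_diff F_mult F_sum F_of_int) auto
  have "trace F (w * es!j) = 0" if j: "j < nb" for j
  proof -
    have "w * es!j = of_int DD * (x * es!j) - (\<Sum>k<nb. of_int (tr_int (x * es!k)) * (gg k * es!j))"
      unfolding w_def by (simp add: left_diff_distrib sum_distrib_right mult.assoc)
    then have "trace F (w * es!j) = of_int DD * trace F (x * es!j) - (\<Sum>k<nb. of_int (tr_int (x * es!k)) * trace F (gg k * es!j))"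
      using x j es_F gg_O
      by (simp add: trace_diff trace_int_mult trace_sum F_mult F_sum F_of_int O_F)
    also have "\<dots> = of_int DD * of_int (tr_int (x * es!j)) - (\<Sum>k<nb. if k = j then of_int (tr_int (x * es!k)) * of_int DD else 0)"
      using trace_gg j tr_int[OF x es_O[OF j]] by (intro arg_cong2[where f = minus] sum.cong refl) auto
    also have "\<dots> = 0" using j by (simp add: sum.delta)
    finally show ?thesis .
  qed
  then have "w = 0" using es_nondeg[OF wF] by blast
  then show ?thesis unfolding w_def by simp
qed

end

context nf
begin

lemma O_poly: assumes "x \<in> \<O> F" shows "poly (of_int_poly p) x \<in> \<O> F"
  using assms by (simp add: poly_altdef degree_map_poly O_sum O_mult O_power O_of_int)

lemma int_multiple: assumes "q \<in> \<O> F" "q \<noteq> 0"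
  shows "\<exists>M::int. M \<noteq> 0 \<and> dvdO F q (of_int M)"
proof -
  obtain p where p: "poly (of_int_poly p) q = 0" "monic p"
    using assms(1) unfolding O_iff algebraic_int_altdef_ipoly by blast
  have "\<forall>p. monic p \<longrightarrow> poly (of_int_poly p) q = 0 \<longrightarrow> (\<exists>M::int. M \<noteq> 0 \<and> dvdO F q (of_int M))"
  proof (intro allI)
    fix p :: "int poly"
    show "monic p \<longrightarrow> poly (of_int_poly p) q = 0 \<longrightarrow> (\<exists>M::int. M \<noteq> 0 \<and> dvdO F q (of_int M))"
    proof (induction p rule: pCons_induct)
      case 0 then show ?case by simp
    next
      case (pCons a p)
      show ?case
      proof (intro impI)
        assume m: "monic (pCons a p)" and r: "poly (of_int_poly (pCons a p)) q = 0"
        have mp: "(of_int_poly (pCons a p) :: complex poly) = pCons (of_int a) (of_int_poly p)"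
          by (rule map_poly_pCons) (use pCons.hyps in auto)
        have ev: "of_int a + q * poly (of_int_poly p) q = 0" using r unfolding mp by simp
        show "\<exists>M::int. M \<noteq> 0 \<and> dvdO F q (of_int M)"
        proof (cases "a = 0")
          case False
          have "of_int a = q * (- poly (of_int_poly p) q)" using ev by (simp add: eq_neg_iff_add_eq_0)
          moreover have "- poly (of_int_poly p) q \<in> \<O> F" using O_poly assms(1) by auto
          ultimately have "dvdO F q (of_int a)" unfolding dvdO_def by blast
          then show ?thesis using False by blast
        next
          case True
          then have p0: "p \<noteq> 0" using pCons.hyps by simp
          then have "monic p" using m by simp
          moreover have "poly (of_int_poly p) q = 0" using ev True assms(2) by simp
          ultimately show ?thesis using pCons.IH by blast
        qed
      qed
    qed
  qed
  then show ?thesis using p by blast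
qed

lemma finite_quot: assumes q: "q \<in> \<O> F" "q \<noteq> 0" shows "finite (\<O> F // congO F q)"
proof -
  obtain M :: int where M: "M \<noteq> 0" "dvdO F q (of_int M)" using int_multiple[OF q] by blast
  define L where "L = \<bar>M * DD\<bar>"
  have Lpos: "L > 0" unfolding L_def using M(1) DD_nz by simp
  define \<phi> where "\<phi> x = (\<lambda>k\<in>{..<nb}. tr_int (x * es!k) mod L)" for x
  have \<phi>_range: "\<phi> ` (\<O> F) \<subseteq> PiE {..<nb} (\<lambda>_. {0..<L})"
    unfolding \<phi>_def using Lpos by (auto simp: PiE_def Pi_def)
  have \<phi>_eq: "(x, y) \<in> congO F q" if xy: "x \<in> \<O> F" "y \<in> \<O> F" "\<phi> x = \<phi> y" for x y
  proof -
    have "\<exists>z. tr_int (x * es!k) - tr_int (y * es!k) = M * DD * z" if k: "k < nb" for k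
    proof -
      have "tr_int (x * es!k) mod L = tr_int (y * es!k) mod L"
        using fun_cong[OF xy(3), of k] k unfolding \<phi>_def by simp
      then have "L dvd (tr_int (x * es!k) - tr_int (y * es!k))" by (simp add: mod_eq_dvd_iff)
      then have "M * DD dvd (tr_int (x * es!k) - tr_int (y * es!k))" unfolding L_def by simp
      then show ?thesis by (auto elim: dvdE)
    qed
    then obtain z where z: "\<And>k. k < nb \<Longrightarrow> tr_int (x * es!k) - tr_int (y * es!k) = M * DD * z k" by metis
    have "of_int DD * (x - y) = of_int DD * x - of_int DD * y" by (simp add: algebra_simps)
    also have "\<dots> = (\<Sum>k<nb. of_int (tr_int (x * es!k) - tr_int (y * es!k)) * gg k)"
      using key_repr[OF xy(1)] key_repr[OF xy(2)] by (simp add: sum_subtractf left_diff_distrib)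
    also have "\<dots> = (\<Sum>k<nb. of_int (M * DD * z k) * gg k)" using z by (intro sum.cong) auto
    also have "\<dots> = of_int DD * (of_int M * (\<Sum>k<nb. of_int (z k) * gg k))"
      by (simp add: sum_distrib_left mult.assoc mult.left_commute)
    finally have "x - y = of_int M * (\<Sum>k<nb. of_int (z k) * gg k)" using DD_nz by simp
    moreover have "(\<Sum>k<nb. of_int (z k) * gg k) \<in> \<O> F" using gg_O by (intro O_sum O_mult) auto
    ultimately have "dvdO F q (x - y)" using dvdO_mult[OF M(2)] by simp
    then show ?thesis using xy by (simp add: congO_iff)
  qed
  define rep where "rep v = (SOME x. x \<in> \<O> F \<and> \<phi> x = v)" for v
  have "\<O> F // congO F q \<subseteq> (\<lambda>v. congO F q `` {rep v}) ` (PiE {..<nb} (\<lambda>_. {0..<L}))"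
  proof
    fix X assume "X \<in> \<O> F // congO F q"
    then obtain x where x: "x \<in> \<O> F" "X = congO F q `` {x}" by (auto elim: quotientE)
    have "\<exists>x'. x' \<in> \<O> F \<and> \<phi> x' = \<phi> x" using x by blast
    then have r: "rep (\<phi> x) \<in> \<O> F \<and> \<phi> (rep (\<phi> x)) = \<phi> x" unfolding rep_def by (rule someI_ex)
    then have "(x, rep (\<phi> x)) \<in> congO F q" using \<phi>_eq[of x "rep (\<phi> x)"] x by simp
    then have "congO F q `` {x} = congO F q `` {rep (\<phi> x)}"
      using equiv_congO[OF q(1)] by (simp add: equiv_class_eq)
    then show "X \<in> (\<lambda>v. congO F q `` {rep v}) ` (PiE {..<nb} (\<lambda>_. {0..<L}))"
      using x \<phi>_range by blast
  qed
  then show ?thesis by (rule finite_subset) (intro finite_imageI finite_PiE, auto)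
qed

end

lemma exp_2pi_eq_1: assumes "exp (2 * of_real pi * \<i> * w) = 1" shows "w \<in> \<int>"
proof -
  define z where "z = 2 * of_real pi * \<i> * w"
  have "norm (exp z) = 1" using assms unfolding z_def by simp
  then have "exp (Re z) = 1" by simp
  then have rz: "Re z = 0" by simp
  have iw: "Im w = 0" using rz unfolding z_def by simp
  have "Re (exp z) = 1" using assms unfolding z_def by simp
  then have "cos (Im z) = 1" using rz by (simp add: Re_exp)
  then obtain n :: int where n: "Im z = of_int n * 2 * pi" using cos_one_2pi_int by blast
  have "Im z = 2 * pi * Re w" unfolding z_def by simp
  then have "Re w = of_int n" using n by simp
  then have "w = of_int n" using iw by (simp add: complex_eq_iff)
  then show ?thesis by simp
qed

lemma exp_2pi_int: assumes "w \<in> \<int>" shows "exp (2 * of_real pi * \<i> * w) = 1"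
proof -
  obtain n :: int where "w = of_int n" using assms by (elim Ints_cases)
  then show ?thesis by (simp add: exp_eq_polar cis_conv_exp[symmetric])
qed

context nf
begin

lemma e_add: "z \<in> F \<Longrightarrow> w \<in> F \<Longrightarrow> e F (z + w) = e F z * e F w"
  unfolding e_def by (simp add: trace_add distrib_left exp_add)

lemma e_int: "trace F z \<in> \<int> \<Longrightarrow> e F z = 1"
  unfolding e_def by (rule exp_2pi_int)

lemma e_one: "e F z = 1 \<Longrightarrow> trace F z \<in> \<int>"
  unfolding e_def by (rule exp_2pi_eq_1)

definition \<psi> where "\<psi> c t = e F (t / (\<delta> * c))"

lemma psi_add: assumes "c \<in> F" "a \<in> F" "b \<in> F" shows "\<psi> c (a + b) = \<psi> c a * \<psi> c b"
proof -
  have "(a + b) / (\<delta> * c) = a / (\<delta> * c) + b / (\<delta> * c)" by (simp add: add_divide_distrib)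
  then show ?thesis unfolding \<psi>_def using assms delta_F by (simp add: e_add F_divide F_mult)
qed

lemma psi_dvd: assumes "c \<in> \<O> F" "c \<noteq> 0" "dvdO F c t" shows "\<psi> c t = 1"
proof -
  obtain k where k: "k \<in> \<O> F" "t = c * k" using assms(3) unfolding dvdO_def by blast
  have "t / (\<delta> * c) = k / \<delta> * 1" using k assms(2) delta_nz by simp
  then have "trace F (t / (\<delta> * c)) \<in> \<int>" using O_div_delta_trace[OF k(1) O_1] by simp
  then show ?thesis unfolding \<psi>_def by (rule e_int)
qed

lemma psi_cong: assumes "c \<in> \<O> F" "c \<noteq> 0" "a \<in> \<O> F" "b \<in> \<O> F" "dvdO F c (a - b)"
  shows "\<psi> c a = \<psi> c b"
proof -
  have "\<psi> c a = \<psi> c ((a - b) + b)" by simp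
  also have "\<dots> = \<psi> c (a - b) * \<psi> c b" using assms by (intro psi_add) auto
  also have "\<psi> c (a - b) = 1" using psi_dvd assms by blast
  finally show ?thesis by simp
qed

lemma psi_scale: assumes "c = d * c'" "d \<noteq> 0" shows "\<psi> c (d * t) = \<psi> c' t"
  unfolding \<psi>_def using assms by (simp add: field_simps)

lemma psi_not_dvd: assumes "c \<in> \<O> F" "c \<noteq> 0" "s \<in> \<O> F" "\<not> dvdO F c s"
  shows "\<exists>a\<in>\<O> F. \<psi> c (s * a) \<noteq> 1"
proof (rule ccontr)
  assume "\<not> (\<exists>a\<in>\<O> F. \<psi> c (s * a) \<noteq> 1)"
  then have all: "\<psi> c (s * a) = 1" if "a \<in> \<O> F" for a using that by blast
  have zF: "s / (\<delta> * c) \<in> F" using assms delta_F by auto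
  have "trace F (s / (\<delta> * c) * y) \<in> \<int>" if "y \<in> \<O> F" for y
  proof -
    have "e F (s * y / (\<delta> * c)) = 1" using all[OF that] unfolding \<psi>_def .
    then have "trace F (s * y / (\<delta> * c)) \<in> \<int>" by (rule e_one)
    then show ?thesis by (simp add: mult.commute mult.left_commute)
  qed
  then have "\<delta> * (s / (\<delta> * c)) \<in> \<O> F" using trace_dual[OF zF] by blast
  then have "s / c \<in> \<O> F" using delta_nz by simp
  moreover have "s = c * (s / c)" using assms(2) by simp
  ultimately have "dvdO F c s" unfolding dvdO_def by blast
  then show False using assms(4) by simp
qed

end

context nf
begin

definition A where "A c = \<O> F // congO F c"
definition cls where "cls c x = congO F c `` {x}"
definition rep :: "complex set \<Rightarrow> complex" where "rep X = (SOME x. x \<in> X)"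
definition isU where "isU c x \<longleftrightarrow> (\<exists>y\<in>\<O> F. dvdO F c (x * y - 1))"
definition minv where "minv c x = (SOME y. y \<in> \<O> F \<and> dvdO F c (x * y - 1))"

lemma cls_A: "x \<in> \<O> F \<Longrightarrow> cls c x \<in> A c"
  unfolding cls_def A_def by (rule quotientI)

lemma cls_eq: assumes "c \<in> \<O> F" "x \<in> \<O> F" "y \<in> \<O> F"
  shows "cls c x = cls c y \<longleftrightarrow> dvdO F c (x - y)"
proof
  assume "cls c x = cls c y"
  then have "(x, y) \<in> congO F c" unfolding cls_def using equiv_congO[OF assms(1)] assms(3)
    by (rule eq_equiv_class)
  then show "dvdO F c (x - y)" by (simp add: congO_iff)
next
  assume "dvdO F c (x - y)"
  then have "(x, y) \<in> congO F c" using assms by (simp add: congO_iff)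
  then show "cls c x = cls c y" unfolding cls_def by (rule equiv_class_eq[OF equiv_congO[OF assms(1)]])
qed

lemma rep_A: assumes "c \<in> \<O> F" "X \<in> A c" shows "rep X \<in> \<O> F" "cls c (rep X) = X"
proof -
  obtain x where x: "x \<in> \<O> F" "X = congO F c `` {x}" using assms(2) unfolding A_def by (auto elim: quotientE)
  have "x \<in> X" using x equiv_class_self[OF equiv_congO[OF assms(1)]] by simp
  then have r: "rep X \<in> X" unfolding rep_def by (rule someI)
  then have "(x, rep X) \<in> congO F c" using x by simp
  then show "rep X \<in> \<O> F" by (simp add: congO_iff)
  have e: "congO F c `` {x} = congO F c `` {rep X}"
    using equiv_class_eq[OF equiv_congO[OF assms(1)] \<open>(x, rep X) \<in> congO F c\<close>] .
  show "cls c (rep X) = X" by (simp only: cls_def) (rule trans[OF e[symmetric] x(2)[symmetric]])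
qed

lemma rep_cls: assumes "c \<in> \<O> F" "x \<in> \<O> F" shows "dvdO F c (rep (cls c x) - x)" "rep (cls c x) \<in> \<O> F"
proof -
  have X: "cls c x \<in> A c" by (rule cls_A[OF assms(2)])
  show r: "rep (cls c x) \<in> \<O> F" using rep_A[OF assms(1) X] by simp
  have "cls c (rep (cls c x)) = cls c x" using rep_A[OF assms(1) X] by simp
  then show "dvdO F c (rep (cls c x) - x)" using cls_eq[OF assms(1) r assms(2)] by simp
qed

lemma A_finite: "c \<in> \<O> F \<Longrightarrow> c \<noteq> 0 \<Longrightarrow> finite (A c)"
  unfolding A_def by (rule finite_quot)

lemma A_card_pos: assumes "c \<in> \<O> F" "c \<noteq> 0" shows "card (A c) > 0"
  using A_finite[OF assms] cls_A[OF O_0, of c] by (auto simp: card_gt_0_iff)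

definition invar where "invar c \<Phi> \<longleftrightarrow> (\<forall>x\<in>\<O> F. \<forall>y\<in>\<O> F. dvdO F c (x - y) \<longrightarrow> \<Phi> x = \<Phi> y)"

lemma invarD: "invar c \<Phi> \<Longrightarrow> x \<in> \<O> F \<Longrightarrow> y \<in> \<O> F \<Longrightarrow> dvdO F c (x - y) \<Longrightarrow> \<Phi> x = \<Phi> y"
  unfolding invar_def by blast

lemma rep_cls_invar: assumes "c \<in> \<O> F" "invar c \<Phi>" "x \<in> \<O> F" shows "\<Phi> (rep (cls c x)) = \<Phi> x"
  using rep_cls[OF assms(1,3)] assms by (intro invarD) auto

lemma dvdO_trans_diff: "dvdO F c (a - b) \<Longrightarrow> dvdO F c (b - d) \<Longrightarrow> dvdO F c (a - d)"
  using dvdO_add[of c "a - b" "b - d"] by simp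

lemma dvdO_swap: "dvdO F c (a - b) \<Longrightarrow> dvdO F c (b - a)"
  using dvdO_uminus[of c "a - b"] by simp

lemma sum_A_map:
  fixes \<Phi> :: "complex \<Rightarrow> 'a::comm_monoid_add"
  assumes c: "c \<in> \<O> F" and iv: "invar c \<Phi>"
    and hO: "\<And>x. x \<in> \<O> F \<Longrightarrow> h x \<in> \<O> F"
    and hcong: "\<And>x y. x \<in> \<O> F \<Longrightarrow> y \<in> \<O> F \<Longrightarrow> dvdO F c (x - y) \<Longrightarrow> dvdO F c (h x - h y)"
    and hinj: "\<And>x y. x \<in> \<O> F \<Longrightarrow> y \<in> \<O> F \<Longrightarrow> dvdO F c (h x - h y) \<Longrightarrow> dvdO F c (x - y)"
    and hsurj: "\<And>y. y \<in> \<O> F \<Longrightarrow> \<exists>x\<in>\<O> F. dvdO F c (h x - y)"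
  shows "(\<Sum>X\<in>A c. \<Phi> (h (rep X))) = (\<Sum>X\<in>A c. \<Phi> (rep X))"
proof -
  define \<pi> where "\<pi> X = cls c (h (rep X))" for X
  have bij: "bij_betw \<pi> (A c) (A c)"
  proof (rule bij_betw_imageI)
    show "inj_on \<pi> (A c)"
    proof (rule inj_onI)
      fix X Y assume XY: "X \<in> A c" "Y \<in> A c" "\<pi> X = \<pi> Y"
      have "dvdO F c (h (rep X) - h (rep Y))"
        using XY(3) unfolding \<pi>_def using cls_eq[OF c] hO rep_A[OF c] XY(1,2) by auto
      then have "dvdO F c (rep X - rep Y)" using hinj rep_A[OF c] XY(1,2) by auto
      then have "cls c (rep X) = cls c (rep Y)" using cls_eq[OF c, of "rep X" "rep Y"] rep_A(1)[OF c] XY(1,2) by blast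
      then show "X = Y" using rep_A(2)[OF c XY(1)] rep_A(2)[OF c XY(2)] by simp
    qed
    show "\<pi> ` A c = A c"
    proof
      show "\<pi> ` A c \<subseteq> A c" unfolding \<pi>_def using cls_A hO rep_A[OF c] by auto
      show "A c \<subseteq> \<pi> ` A c"
      proof
        fix Y assume Y: "Y \<in> A c"
        obtain x where x: "x \<in> \<O> F" "dvdO F c (h x - rep Y)" using hsurj rep_A[OF c Y] by blast
        have r: "rep (cls c x) \<in> \<O> F" "dvdO F c (rep (cls c x) - x)" using rep_cls[OF c x(1)] by auto
        have "dvdO F c (h (rep (cls c x)) - h x)" using hcong[OF r(1) x(1) r(2)] .
        then have "dvdO F c (h (rep (cls c x)) - rep Y)" using x(2) by (rule dvdO_trans_diff)
        then have "\<pi> (cls c x) = cls c (rep Y)" unfolding \<pi>_def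
          by (rule iffD2[OF cls_eq[OF c hO[OF r(1)] rep_A(1)[OF c Y]]])
        then have "\<pi> (cls c x) = Y" using rep_A[OF c Y] by simp
        moreover have "cls c x \<in> A c" using cls_A[OF x(1)] .
        ultimately show "Y \<in> \<pi> ` A c" by blast
      qed
    qed
  qed
  have "(\<Sum>X\<in>A c. \<Phi> (h (rep X))) = (\<Sum>X\<in>A c. \<Phi> (rep (\<pi> X)))"
    unfolding \<pi>_def using rep_cls_invar[OF c iv] hO rep_A[OF c] by (intro sum.cong) auto
  also have "\<dots> = (\<Sum>X\<in>A c. \<Phi> (rep X))" using sum.reindex_bij_betw[OF bij] .
  finally show ?thesis .
qed

lemma invar_psi: assumes "c \<in> \<O> F" "c \<noteq> 0" "s \<in> \<O> F" shows "invar c (\<lambda>t. \<psi> c (s * t))"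
  unfolding invar_def
proof (intro ballI impI)
  fix x y assume xy: "x \<in> \<O> F" "y \<in> \<O> F" "dvdO F c (x - y)"
  have "dvdO F c (s * x - s * y)" using dvdO_mult_left[OF xy(3) assms(3)] by (simp add: algebra_simps)
  then show "\<psi> c (s * x) = \<psi> c (s * y)" using assms xy by (intro psi_cong) auto
qed

lemma orth: assumes c: "c \<in> \<O> F" "c \<noteq> 0" and s: "s \<in> \<O> F"
  shows "(\<Sum>X\<in>A c. \<psi> c (s * rep X)) = (if dvdO F c s then of_nat (card (A c)) else 0)"
proof (cases "dvdO F c s")
  case True
  have "\<psi> c (s * rep X) = 1" if "X \<in> A c" for X
    using c True rep_A[OF c(1) that] by (intro psi_dvd dvdO_mult) auto
  then show ?thesis using True by simp
next
  case False
  obtain a where a: "a \<in> \<O> F" "\<psi> c (s * a) \<noteq> 1" using psi_not_dvd[OF c s False] by blast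
  have "(\<Sum>X\<in>A c. \<psi> c (s * (rep X + a))) = (\<Sum>X\<in>A c. \<psi> c (s * rep X))"
  proof (rule sum_A_map[OF c(1) invar_psi[OF c s], where h = "\<lambda>x. x + a"])
    show "\<And>x. x \<in> \<O> F \<Longrightarrow> x + a \<in> \<O> F" using a by auto
    show "\<And>x y. dvdO F c (x - y) \<Longrightarrow> dvdO F c (x + a - (y + a))" by simp
    show "\<And>x y. dvdO F c (x + a - (y + a)) \<Longrightarrow> dvdO F c (x - y)" by simp
    show "\<And>y. y \<in> \<O> F \<Longrightarrow> \<exists>x\<in>\<O> F. dvdO F c (x + a - y)"
      using a dvdO_0 by (intro bexI[of _ "y - a" for y]) auto
  qed
  moreover have "\<psi> c (s * (rep X + a)) = \<psi> c (s * a) * \<psi> c (s * rep X)" if "X \<in> A c" for X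
    using rep_A[OF c(1) that] a s c by (simp add: distrib_left psi_add O_F O_mult mult.commute)
  ultimately have "\<psi> c (s * a) * (\<Sum>X\<in>A c. \<psi> c (s * rep X)) = (\<Sum>X\<in>A c. \<psi> c (s * rep X))"
    by (simp add: sum_distrib_left)
  then have "(\<psi> c (s * a) - 1) * (\<Sum>X\<in>A c. \<psi> c (s * rep X)) = 0" by (simp add: algebra_simps)
  then show ?thesis using False a(2) by simp
qed

lemma isU_cong: assumes "c \<in> \<O> F" "x \<in> \<O> F" "x' \<in> \<O> F" "dvdO F c (x - x')" "isU c x" shows "isU c x'"
proof -
  obtain y where y: "y \<in> \<O> F" "dvdO F c (x * y - 1)" using assms(5) unfolding isU_def by blast
  have "x' * y - 1 = (x * y - 1) - (x - x') * y" by (simp add: algebra_simps)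
  moreover have "dvdO F c ((x * y - 1) - (x - x') * y)" by (rule dvdO_diff[OF y(2) dvdO_mult[OF assms(4) y(1)]])
  ultimately have "dvdO F c (x' * y - 1)" by (simp only:)
  then show ?thesis unfolding isU_def using y(1) by blast
qed

lemma minv_prop: assumes "isU c x" shows "minv c x \<in> \<O> F" "dvdO F c (x * minv c x - 1)"
proof -
  have "\<exists>y. y \<in> \<O> F \<and> dvdO F c (x * y - 1)" using assms unfolding isU_def by blast
  then have "minv c x \<in> \<O> F \<and> dvdO F c (x * minv c x - 1)" unfolding minv_def by (rule someI_ex)
  then show "minv c x \<in> \<O> F" "dvdO F c (x * minv c x - 1)" by auto
qed

lemma minv_unique: assumes "x \<in> \<O> F" "y \<in> \<O> F" "y' \<in> \<O> F" "dvdO F c (x * y - 1)" "dvdO F c (x * y' - 1)"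
  shows "dvdO F c (y - y')"
proof -
  have "y - y' = y' * (x * y - 1) - y * (x * y' - 1)" by (simp add: algebra_simps)
  moreover have "dvdO F c (y' * (x * y - 1) - y * (x * y' - 1))"
    by (rule dvdO_diff[OF dvdO_mult_left[OF assms(4) assms(3)] dvdO_mult_left[OF assms(5) assms(2)]])
  ultimately show ?thesis by (simp only:)
qed

lemma U_iff: assumes c: "c \<in> \<O> F" shows "unit_classes F c = {X \<in> A c. isU c (rep X)}"
proof
  show "unit_classes F c \<subseteq> {X \<in> A c. isU c (rep X)}"
  proof
    fix X assume "X \<in> unit_classes F c"
    then obtain x where x: "x \<in> \<O> F" "isU c x" "X = congO F c `` {x}"
      unfolding unit_classes_def isU_def by (auto elim!: quotientE)
    then have X: "X = cls c x" unfolding cls_def by simp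
    have "isU c (rep X)" unfolding X
      by (rule isU_cong[OF c x(1) rep_cls(2)[OF c x(1)] dvdO_swap[OF rep_cls(1)[OF c x(1)]] x(2)])
    then show "X \<in> {X \<in> A c. isU c (rep X)}" using X cls_A[OF x(1)] by auto
  qed
  show "{X \<in> A c. isU c (rep X)} \<subseteq> unit_classes F c"
  proof
    fix X assume X: "X \<in> {X \<in> A c. isU c (rep X)}"
    then have eqX: "X = congO F c `` {rep X}" "rep X \<in> \<O> F" using rep_A[OF c] unfolding cls_def by auto
    have m: "rep X \<in> {x \<in> \<O> F. \<exists>y\<in>\<O> F. dvdO F c (x * y - 1)}" using X eqX(2) unfolding isU_def by auto
    have "congO F c `` {rep X} \<in> {x \<in> \<O> F. \<exists>y\<in>\<O> F. dvdO F c (x * y - 1)} // congO F c"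
      by (rule quotientI[OF m])
    then show "X \<in> unit_classes F c" unfolding unit_classes_def using eqX(1) by simp
  qed
qed

lemma kloosterman_unfold:
  "kloosterman F a b c = (\<Sum>X\<in>unit_classes F c. e F ((a * rep X + b * minv c (rep X)) / c))"
  unfolding kloosterman_def rep_def minv_def Let_def by simp

end

context nf
begin

lemma orth_ind: assumes c: "c \<in> \<O> F" "c \<noteq> 0" and s: "s \<in> \<O> F"
  shows "(if dvdO F c s then 1 else 0) = (\<Sum>X\<in>A c. \<psi> c (s * rep X)) / of_nat (card (A c))"
  using orth[OF c s] A_card_pos[OF c] by simp

lemma step1:
  assumes c: "c \<in> \<O> F" "c \<noteq> 0" and \<nu>: "\<nu> \<in> \<O> F" and \<mu>: "\<mu> \<in> \<O> F"
  shows "kloosterman F (\<nu> / \<delta>) (\<mu> / \<delta>) c =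
    (\<Sum>T\<in>A c. \<psi> c (- rep T) * (\<Sum>X\<in>A c. if dvdO F c (rep T * rep X + \<mu>) then \<psi> c (\<nu> * rep X) else 0))"
proof -
  define N where "N = (of_nat (card (A c)) :: complex)"
  have N0: "N \<noteq> 0" unfolding N_def using A_card_pos[OF c] by simp
  have repO: "\<And>X. X \<in> A c \<Longrightarrow> rep X \<in> \<O> F" using rep_A(1)[OF c(1)] .
  have cF: "c \<in> F" using c by auto
  have inner: "(\<Sum>T\<in>A c. \<psi> c (- rep T) * (if dvdO F c (rep T * x + \<mu>) then 1 else 0)) =
      (\<Sum>Y\<in>A c. if dvdO F c (x * rep Y - 1) then \<psi> c (\<mu> * rep Y) else 0)" if x: "x \<in> \<O> F" for x
  proof -
    have "(\<Sum>T\<in>A c. \<psi> c (- rep T) * (if dvdO F c (rep T * x + \<mu>) then 1 else 0)) =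
        (\<Sum>T\<in>A c. \<psi> c (- rep T) * ((\<Sum>Y\<in>A c. \<psi> c ((rep T * x + \<mu>) * rep Y)) / N))"
    proof (intro sum.cong refl)
      fix T assume T: "T \<in> A c"
      have sO: "rep T * x + \<mu> \<in> \<O> F" using repO[OF T] x \<mu> by auto
      show "\<psi> c (- rep T) * (if dvdO F c (rep T * x + \<mu>) then 1 else 0) =
        \<psi> c (- rep T) * ((\<Sum>Y\<in>A c. \<psi> c ((rep T * x + \<mu>) * rep Y)) / N)"
        unfolding N_def by (subst orth_ind[OF c sO]) (rule refl)
    qed
    also have "\<dots> = (\<Sum>T\<in>A c. \<Sum>Y\<in>A c. \<psi> c (\<mu> * rep Y) * \<psi> c ((x * rep Y - 1) * rep T) / N)"
    proof (intro sum.cong refl)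
      fix T assume T: "T \<in> A c"
      have "\<psi> c (- rep T) * ((\<Sum>Y\<in>A c. \<psi> c ((rep T * x + \<mu>) * rep Y)) / N) =
          (\<Sum>Y\<in>A c. \<psi> c (- rep T) * \<psi> c ((rep T * x + \<mu>) * rep Y) / N)"
        by (simp add: sum_distrib_left sum_divide_distrib)
      also have "\<dots> = (\<Sum>Y\<in>A c. \<psi> c (\<mu> * rep Y) * \<psi> c ((x * rep Y - 1) * rep T) / N)"
      proof (intro sum.cong refl)
        fix Y assume Y: "Y \<in> A c"
        have FF: "rep T \<in> F" "rep Y \<in> F" "x \<in> F" "\<mu> \<in> F" using repO T Y x \<mu> by auto
        have "\<psi> c (- rep T) * \<psi> c ((rep T * x + \<mu>) * rep Y) = \<psi> c (- rep T + (rep T * x + \<mu>) * rep Y)"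
          using FF cF by (intro psi_add[symmetric]) auto
        also have "- rep T + (rep T * x + \<mu>) * rep Y = \<mu> * rep Y + (x * rep Y - 1) * rep T"
          by (simp add: algebra_simps)
        also have "\<psi> c \<dots> = \<psi> c (\<mu> * rep Y) * \<psi> c ((x * rep Y - 1) * rep T)"
          using FF cF by (intro psi_add) auto
        finally show "\<psi> c (- rep T) * \<psi> c ((rep T * x + \<mu>) * rep Y) / N =
            \<psi> c (\<mu> * rep Y) * \<psi> c ((x * rep Y - 1) * rep T) / N" by simp
      qed
      finally show "\<psi> c (- rep T) * ((\<Sum>Y\<in>A c. \<psi> c ((rep T * x + \<mu>) * rep Y)) / N) =
          (\<Sum>Y\<in>A c. \<psi> c (\<mu> * rep Y) * \<psi> c ((x * rep Y - 1) * rep T) / N)" .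
    qed
    also have "\<dots> = (\<Sum>Y\<in>A c. \<psi> c (\<mu> * rep Y) * ((\<Sum>T\<in>A c. \<psi> c ((x * rep Y - 1) * rep T)) / N))"
      by (subst sum.swap) (simp add: sum_distrib_left sum_divide_distrib)
    also have "\<dots> = (\<Sum>Y\<in>A c. \<psi> c (\<mu> * rep Y) * (if dvdO F c (x * rep Y - 1) then 1 else 0))"
    proof (intro sum.cong refl)
      fix Y assume Y: "Y \<in> A c"
      have sO: "x * rep Y - 1 \<in> \<O> F" using repO[OF Y] x by auto
      show "\<psi> c (\<mu> * rep Y) * ((\<Sum>T\<in>A c. \<psi> c ((x * rep Y - 1) * rep T)) / N) =
        \<psi> c (\<mu> * rep Y) * (if dvdO F c (x * rep Y - 1) then 1 else 0)"
        unfolding N_def by (subst orth_ind[OF c sO]) (rule refl)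
    qed
    also have "\<dots> = (\<Sum>Y\<in>A c. if dvdO F c (x * rep Y - 1) then \<psi> c (\<mu> * rep Y) else 0)"
      by (intro sum.cong refl) simp
    finally show ?thesis .
  qed
  have delta: "(\<Sum>Y\<in>A c. if dvdO F c (x * rep Y - 1) then \<psi> c (\<mu> * rep Y) else 0) =
      (if isU c x then \<psi> c (\<mu> * minv c x) else 0)" if x: "x \<in> \<O> F" for x
  proof (cases "isU c x")
    case False
    have "\<not> dvdO F c (x * rep Y - 1)" if "Y \<in> A c" for Y
      using False repO[OF that] unfolding isU_def by blast
    then show ?thesis using False by simp
  next
    case True
    note m = minv_prop[OF True]
    define Y0 where "Y0 = cls c (minv c x)"
    have Y0: "Y0 \<in> A c" unfolding Y0_def using cls_A[OF m(1)] .
    have iff: "dvdO F c (x * rep Y - 1) \<longleftrightarrow> Y = Y0" if Y: "Y \<in> A c" for Y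
    proof
      assume "dvdO F c (x * rep Y - 1)"
      then have "dvdO F c (rep Y - minv c x)" using minv_unique[OF x repO[OF Y] m(1)] m(2) by blast
      then have "cls c (rep Y) = cls c (minv c x)" using cls_eq[OF c(1) repO[OF Y] m(1)] by simp
      then show "Y = Y0" unfolding Y0_def using rep_A(2)[OF c(1) Y] by simp
    next
      assume "Y = Y0"
      then have d: "dvdO F c (rep Y - minv c x)" unfolding Y0_def using rep_cls[OF c(1) m(1)] by simp
      have "x * rep Y - 1 = x * (rep Y - minv c x) + (x * minv c x - 1)" by (simp add: algebra_simps)
      moreover have "dvdO F c (x * (rep Y - minv c x) + (x * minv c x - 1))"
        by (rule dvdO_add[OF dvdO_mult_left[OF d x] m(2)])
      ultimately show "dvdO F c (x * rep Y - 1)" by (simp only:)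
    qed
    have "(\<Sum>Y\<in>A c. if dvdO F c (x * rep Y - 1) then \<psi> c (\<mu> * rep Y) else 0) =
        (\<Sum>Y\<in>A c. if Y = Y0 then \<psi> c (\<mu> * rep Y) else 0)"
      using iff by (intro sum.cong refl) auto
    also have "\<dots> = \<psi> c (\<mu> * rep Y0)" using Y0 A_finite[OF c] by (simp add: sum.delta')
    also have "\<dots> = \<psi> c (\<mu> * minv c x)"
    proof (rule psi_cong[OF c])
      show "\<mu> * rep Y0 \<in> \<O> F" "\<mu> * minv c x \<in> \<O> F" using \<mu> repO[OF Y0] m(1) by auto
      have "dvdO F c (rep Y0 - minv c x)" unfolding Y0_def using rep_cls[OF c(1) m(1)] by simp
      then have "dvdO F c (\<mu> * (rep Y0 - minv c x))" using \<mu> by (rule dvdO_mult_left)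
      then show "dvdO F c (\<mu> * rep Y0 - \<mu> * minv c x)" by (simp add: algebra_simps)
    qed
    finally show ?thesis using True by simp
  qed
  have "(\<Sum>T\<in>A c. \<psi> c (- rep T) * (\<Sum>X\<in>A c. if dvdO F c (rep T * rep X + \<mu>) then \<psi> c (\<nu> * rep X) else 0)) =
      (\<Sum>T\<in>A c. \<Sum>X\<in>A c. \<psi> c (\<nu> * rep X) * (\<psi> c (- rep T) * (if dvdO F c (rep T * rep X + \<mu>) then 1 else 0)))"
    apply (intro sum.cong refl)
    apply (simp only: sum_distrib_left)
    apply (intro sum.cong refl)
    apply simp
    done
  also have "\<dots> = (\<Sum>X\<in>A c. \<psi> c (\<nu> * rep X) * (\<Sum>T\<in>A c. \<psi> c (- rep T) * (if dvdO F c (rep T * rep X + \<mu>) then 1 else 0)))"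
    by (subst sum.swap) (simp add: sum_distrib_left)
  also have "\<dots> = (\<Sum>X\<in>A c. \<psi> c (\<nu> * rep X) * (if isU c (rep X) then \<psi> c (\<mu> * minv c (rep X)) else 0))"
    using inner delta repO by (intro sum.cong refl) auto
  also have "\<dots> = (\<Sum>X\<in>{X\<in>A c. isU c (rep X)}. \<psi> c (\<nu> * rep X) * \<psi> c (\<mu> * minv c (rep X)))"
    by (simp add: sum.inter_filter[OF A_finite[OF c], symmetric] if_distrib cong: if_cong)
  also have "\<dots> = (\<Sum>X\<in>unit_classes F c. \<psi> c (\<nu> * rep X + \<mu> * minv c (rep X)))"
    unfolding U_iff[OF c(1)]
  proof (intro sum.cong refl)
    fix X assume X: "X \<in> {X\<in>A c. isU c (rep X)}"
    then have "rep X \<in> F" "minv c (rep X) \<in> F" using repO minv_prop(1) by auto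
    then show "\<psi> c (\<nu> * rep X) * \<psi> c (\<mu> * minv c (rep X)) = \<psi> c (\<nu> * rep X + \<mu> * minv c (rep X))"
      using \<nu> \<mu> cF by (intro psi_add[symmetric]) auto
  qed
  also have "\<dots> = kloosterman F (\<nu> / \<delta>) (\<mu> / \<delta>) c"
    unfolding kloosterman_unfold \<psi>_def using delta_nz c(2) by (intro sum.cong refl) (simp add: field_simps)
  finally show ?thesis by simp
qed

end

context nf
begin

definition idl where "idl a b = {a * x + b * y | x y. x \<in> \<O> F \<and> y \<in> \<O> F}"
definition gen where "gen I = (SOME d. d \<in> \<O> F \<and> I = principal_ideal F d)"
definition Div where "Div c = {principal_ideal F d | d. d \<in> \<O> F \<and> d \<noteq> 0 \<and> dvdO F d c}"

lemma pi_mem: "x \<in> principal_ideal F d \<longleftrightarrow> dvdO F d x"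
  unfolding principal_ideal_def dvdO_def by auto

lemma pi_eq_iff: assumes "a \<in> \<O> F" "b \<in> \<O> F"
  shows "principal_ideal F a = principal_ideal F b \<longleftrightarrow> dvdO F a b \<and> dvdO F b a"
proof
  assume eq: "principal_ideal F a = principal_ideal F b"
  have "b \<in> principal_ideal F b" using dvdO_refl[OF assms(2)] by (simp add: pi_mem)
  then have "b \<in> principal_ideal F a" using eq by simp
  then have 1: "dvdO F a b" by (simp add: pi_mem)
  have "a \<in> principal_ideal F a" using dvdO_refl[OF assms(1)] by (simp add: pi_mem)
  then have "a \<in> principal_ideal F b" using eq by simp
  then have 2: "dvdO F b a" by (simp add: pi_mem)
  show "dvdO F a b \<and> dvdO F b a" using 1 2 by simp
next
  assume "dvdO F a b \<and> dvdO F b a"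
  then show "principal_ideal F a = principal_ideal F b"
    unfolding set_eq_iff pi_mem using dvdO_trans[of a b] dvdO_trans[of b a] by blast
qed

lemma gen_prop: assumes "d \<in> \<O> F" "I = principal_ideal F d"
  shows "gen I \<in> \<O> F" "principal_ideal F (gen I) = I"
proof -
  have "\<exists>d. d \<in> \<O> F \<and> I = principal_ideal F d" using assms by blast
  then have "gen I \<in> \<O> F \<and> I = principal_ideal F (gen I)" unfolding gen_def by (rule someI_ex)
  then show "gen I \<in> \<O> F" "principal_ideal F (gen I) = I" by auto
qed

lemma gen_dvd_iff: assumes "d \<in> \<O> F" "I = principal_ideal F d"
  shows "dvdO F (gen I) x \<longleftrightarrow> dvdO F d x"
proof -
  have "dvdO F (gen I) d \<and> dvdO F d (gen I)"
    using gen_prop[OF assms] assms pi_eq_iff[of "gen I" d] by simp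
  then show ?thesis using dvdO_trans[of "gen I" d x] dvdO_trans[of d "gen I" x] by blast
qed

lemma dvdO_zero_iff: "dvdO F 0 x \<longleftrightarrow> x = 0"
  unfolding dvdO_def by auto

lemma gen_nz: assumes "d \<in> \<O> F" "I = principal_ideal F d" "d \<noteq> 0" shows "gen I \<noteq> 0"
proof
  assume "gen I = 0"
  then have "dvdO F 0 d" using gen_dvd_iff[OF assms(1,2), of d] dvdO_refl[OF assms(1)] by simp
  then show False using assms(3) by (simp add: dvdO_zero_iff)
qed

lemma prime_field: assumes p: "prime_elemO F p" and t: "t \<in> \<O> F" "\<not> dvdO F p t"
  shows "\<exists>u\<in>\<O> F. dvdO F p (t * u - 1)"
proof -
  have pO: "p \<in> \<O> F" "p \<noteq> 0" using p unfolding prime_elemO_def by auto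
  define f where "f X = cls p (t * rep X)" for X
  have fin: "finite (A p)" using A_finite[OF pO] .
  have sub: "f ` A p \<subseteq> A p" unfolding f_def using rep_A(1)[OF pO(1)] t by (auto intro!: cls_A)
  have inj: "inj_on f (A p)"
  proof (rule inj_onI)
    fix X Y assume XY: "X \<in> A p" "Y \<in> A p" "f X = f Y"
    have r: "rep X \<in> \<O> F" "rep Y \<in> \<O> F" using rep_A(1)[OF pO(1)] XY by auto
    have tr: "t * rep X \<in> \<O> F" "t * rep Y \<in> \<O> F" using r t by auto
    have "dvdO F p (t * rep X - t * rep Y)" using XY(3) unfolding f_def by (rule iffD1[OF cls_eq[OF pO(1) tr]])
    then have "dvdO F p (t * (rep X - rep Y))" by (simp add: algebra_simps)
    then have "dvdO F p (rep X - rep Y)" using p t r unfolding prime_elemO_def by blast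
    then have "cls p (rep X) = cls p (rep Y)" using cls_eq[OF pO(1) r] by simp
    then show "X = Y" using rep_A(2)[OF pO(1)] XY(1,2) by simp
  qed
  have "f ` A p = A p" using endo_inj_surj[OF fin sub inj] .
  moreover have "cls p 1 \<in> A p" using cls_A[OF O_1] .
  ultimately have "cls p 1 \<in> f ` A p" by simp
  then obtain X where X0: "X \<in> A p" "cls p 1 = f X" by (rule imageE)
  then have X: "X \<in> A p" "f X = cls p 1" by auto
  have r: "rep X \<in> \<O> F" using rep_A(1)[OF pO(1) X(1)] .
  have tr: "t * rep X \<in> \<O> F" using r t by auto
  have "dvdO F p (t * rep X - 1)" using X(2) unfolding f_def by (rule iffD1[OF cls_eq[OF pO(1) tr O_1]])
  then show ?thesis using r by blast
qed

lemma prod_primes: assumes "\<forall>p\<in>set ps. prime_elemO F p" shows "prod_list ps \<in> \<O> F" "prod_list ps \<noteq> 0"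
  using assms by (induction ps) (auto simp: prime_elemO_def)

lemma gcd_exists:
  assumes "\<forall>p\<in>set ps. prime_elemO F p" "t \<in> \<O> F"
  shows "\<exists>d\<in>\<O> F. d \<noteq> 0 \<and> dvdO F d (prod_list ps) \<and> dvdO F d t \<and> (\<exists>a\<in>\<O> F. \<exists>b\<in>\<O> F. d = a * t + b * prod_list ps)"
  using assms
proof (induction ps arbitrary: t)
  case Nil
  have "(1::complex) = 0 * t + 1 * prod_list []" by simp
  then have ex: "\<exists>a\<in>\<O> F. \<exists>b\<in>\<O> F. (1::complex) = a * t + b * prod_list []"
    by (intro bexI[of _ 0] bexI[of _ 1] O_0 O_1)
  have "dvdO F 1 (prod_list [])" "dvdO F 1 t" using dvdO_1 Nil by auto
  then show ?case
  proof (intro bexI[of _ 1, OF _ O_1])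
    show "(1::complex) \<noteq> 0 \<and> dvdO F 1 (prod_list []) \<and> dvdO F 1 t \<and> (\<exists>a\<in>\<O> F. \<exists>b\<in>\<O> F. (1::complex) = a * t + b * prod_list [])"
      using ex \<open>dvdO F 1 (prod_list [])\<close> \<open>dvdO F 1 t\<close> by simp
  qed
next
  case (Cons p ps)
  have p: "prime_elemO F p" and ps: "\<forall>p\<in>set ps. prime_elemO F p" using Cons.prems by auto
  have pO: "p \<in> \<O> F" "p \<noteq> 0" using p unfolding prime_elemO_def by auto
  have cO: "prod_list ps \<in> \<O> F" using prod_primes[OF ps] by simp
  show ?case
  proof (cases "dvdO F p t")
    case False
    obtain u where u: "u \<in> \<O> F" "dvdO F p (t * u - 1)" using prime_field[OF p Cons.prems(2) False] by blast
    obtain v where v: "v \<in> \<O> F" "t * u - 1 = p * v" using u(2) unfolding dvdO_def by blast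
    obtain d where d: "d \<in> \<O> F" "d \<noteq> 0" "dvdO F d (prod_list ps)" "dvdO F d t"
      and ab: "\<exists>a\<in>\<O> F. \<exists>b\<in>\<O> F. d = a * t + b * prod_list ps"
      using Cons.IH[OF ps Cons.prems(2)] by blast
    obtain a b where a: "a \<in> \<O> F" "b \<in> \<O> F" "d = a * t + b * prod_list ps" using ab by blast
    have "d = (a + b * prod_list ps * u) * t + (- b * v) * prod_list (p # ps)"
    proof -
      have "b * prod_list ps = b * prod_list ps * (t * u - p * v)" using v(2) by (simp add: algebra_simps)
      then show ?thesis using a(3) by (simp add: algebra_simps)
    qed
    moreover have "a + b * prod_list ps * u \<in> \<O> F" "- b * v \<in> \<O> F" using a u v cO by auto
    ultimately have ex: "\<exists>a\<in>\<O> F. \<exists>b\<in>\<O> F. d = a * t + b * prod_list (p # ps)"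
      by (intro bexI[of _ "a + b * prod_list ps * u"] bexI[of _ "- b * v"])
    have "dvdO F d (prod_list (p # ps))" using dvdO_mult_left[OF d(3) pO(1)] by simp
    then show ?thesis
    proof (intro bexI[of _ d, OF _ d(1)])
      show "d \<noteq> 0 \<and> dvdO F d (prod_list (p # ps)) \<and> dvdO F d t \<and> (\<exists>a\<in>\<O> F. \<exists>b\<in>\<O> F. d = a * t + b * prod_list (p # ps))"
        using d(2,4) ex \<open>dvdO F d (prod_list (p # ps))\<close> by simp
    qed
  next
    case True
    obtain t' where t': "t' \<in> \<O> F" "t = p * t'" using True unfolding dvdO_def by blast
    obtain d where d: "d \<in> \<O> F" "d \<noteq> 0" "dvdO F d (prod_list ps)" "dvdO F d t'"
      and ab: "\<exists>a\<in>\<O> F. \<exists>b\<in>\<O> F. d = a * t' + b * prod_list ps"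
      using Cons.IH[OF ps t'(1)] by blast
    obtain a b where a: "a \<in> \<O> F" "b \<in> \<O> F" "d = a * t' + b * prod_list ps" using ab by blast
    have "p * d = a * t + b * prod_list (p # ps)" using a(3) t'(2) by (simp add: algebra_simps)
    moreover have "dvdO F (p * d) (prod_list (p # ps))"
      using d(3) unfolding dvdO_def by (auto simp: mult.assoc)
    moreover have "dvdO F (p * d) t" using d(4) t'(2) unfolding dvdO_def by (auto simp: mult.assoc)
    moreover have "p * d \<in> \<O> F" "p * d \<noteq> 0" using pO d by auto
    moreover have "\<exists>a'\<in>\<O> F. \<exists>b'\<in>\<O> F. p * d = a' * t + b' * prod_list (p # ps)"
      using a(1,2) \<open>p * d = a * t + b * prod_list (p # ps)\<close> by (intro bexI[of _ a] bexI[of _ b])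
    ultimately show ?thesis
    proof (intro bexI[of _ "p * d"])
      assume h: "p * d = a * t + b * prod_list (p # ps)" "dvdO F (p * d) (prod_list (p # ps))"
        "dvdO F (p * d) t" "p * d \<in> \<O> F" "p * d \<noteq> 0"
        "\<exists>a'\<in>\<O> F. \<exists>b'\<in>\<O> F. p * d = a' * t + b' * prod_list (p # ps)"
      show "p * d \<noteq> 0 \<and> dvdO F (p * d) (prod_list (p # ps)) \<and> dvdO F (p * d) t \<and> (\<exists>a\<in>\<O> F. \<exists>b\<in>\<O> F. p * d = a * t + b * prod_list (p # ps))"
        using h(2,3,5,6) by simp
      show "p * d \<in> \<O> F" by (fact h(4))
    qed
  qed
qed

lemma idl_cong: assumes "c \<in> \<O> F" "t \<in> \<O> F" "t' \<in> \<O> F" "dvdO F c (t - t')" shows "idl t c = idl t' c"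
proof -
  have sub: "idl t c \<subseteq> idl t' c" if h: "t \<in> \<O> F" "t' \<in> \<O> F" "dvdO F c (t - t')" for t t'
  proof
    fix z assume "z \<in> idl t c"
    then obtain x y where xy: "x \<in> \<O> F" "y \<in> \<O> F" "z = t * x + c * y" unfolding idl_def by blast
    obtain k where k: "k \<in> \<O> F" "t - t' = c * k" using h(3) unfolding dvdO_def by blast
    have "t = t' + c * k" using k(2) by (simp add: algebra_simps)
    then have "z = t' * x + c * (k * x + y)" using xy(3) by (simp add: algebra_simps)
    moreover have "k * x + y \<in> \<O> F" using k xy by auto
    ultimately show "z \<in> idl t' c" unfolding idl_def using xy by blast
  qed
  show ?thesis using sub[OF assms(2,3,4)] sub[OF assms(3,2) dvdO_swap[OF assms(4)]] by blast
qed

end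

context nf
begin

lemma idl_gcd:
  assumes "d \<in> \<O> F" "t \<in> \<O> F" "c \<in> \<O> F" "dvdO F d c" "dvdO F d t"
    "a \<in> \<O> F" "b \<in> \<O> F" "d = a * t + b * c"
  shows "idl t c = principal_ideal F d"
proof
  show "idl t c \<subseteq> principal_ideal F d"
  proof
    fix z assume "z \<in> idl t c"
    then obtain x y where xy: "x \<in> \<O> F" "y \<in> \<O> F" "z = t * x + c * y" unfolding idl_def by blast
    have "dvdO F d (t * x + c * y)" using assms(4,5) xy by (intro dvdO_add dvdO_mult)
    then show "z \<in> principal_ideal F d" using xy(3) by (simp add: pi_mem)
  qed
  show "principal_ideal F d \<subseteq> idl t c"
  proof
    fix z assume "z \<in> principal_ideal F d"
    then obtain k where k: "k \<in> \<O> F" "z = d * k" unfolding principal_ideal_def by blast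
    have "z = t * (a * k) + c * (b * k)" using k(2) assms(8) by (simp add: algebra_simps)
    moreover have "a * k \<in> \<O> F" "b * k \<in> \<O> F" using assms k by auto
    ultimately show "z \<in> idl t c" unfolding idl_def by blast
  qed
qed

lemma idl_unit:
  assumes "d \<in> \<O> F" "c' \<in> \<O> F" "c = d * c'" "r \<in> \<O> F" "isU c' r"
  shows "idl (d * r) c = principal_ideal F d"
proof -
  obtain s where s: "s \<in> \<O> F" "dvdO F c' (r * s - 1)" using assms(5) unfolding isU_def by blast
  obtain k where k: "k \<in> \<O> F" "r * s - 1 = c' * k" using s(2) unfolding dvdO_def by blast
  have "d = s * (d * r) + (- k) * c" using k(2) assms(3) by (simp add: algebra_simps)
  moreover have "dvdO F d c" using assms unfolding dvdO_def by blast
  moreover have "dvdO F d (d * r)" using assms unfolding dvdO_def by blast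
  ultimately show ?thesis using assms s k by (intro idl_gcd[where a = s and b = "- k"]) auto
qed

lemma cancel: assumes "d \<noteq> 0" "c = d * c'" "dvdO F c (d * z)" shows "dvdO F c' z"
proof -
  obtain k where k: "k \<in> \<O> F" "d * z = c * k" using assms(3) unfolding dvdO_def by blast
  then have "z = c' * k" using assms(1,2) by (simp add: mult.assoc)
  then show ?thesis using k(1) unfolding dvdO_def by blast
qed

lemma cancel_rev: assumes "c = d * c'" "dvdO F c' z" shows "dvdO F c (d * z)"
  using assms unfolding dvdO_def by (auto simp: mult.assoc)

lemma Div_props: assumes "I \<in> Div c" "c \<in> \<O> F"
  shows "gen I \<in> \<O> F" "gen I \<noteq> 0" "dvdO F (gen I) c" "principal_ideal F (gen I) = I"
    "c / gen I \<in> \<O> F" "c = gen I * (c / gen I)"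
proof -
  obtain d where d: "d \<in> \<O> F" "d \<noteq> 0" "dvdO F d c" "I = principal_ideal F d"
    using assms(1) unfolding Div_def by blast
  show g: "gen I \<in> \<O> F" "principal_ideal F (gen I) = I" using gen_prop[OF d(1,4)] by auto
  show nz: "gen I \<noteq> 0" using gen_nz[OF d(1,4,2)] .
  show dv: "dvdO F (gen I) c" using gen_dvd_iff[OF d(1,4)] d(3) by simp
  then obtain k where k: "k \<in> \<O> F" "c = gen I * k" unfolding dvdO_def by blast
  then have "c / gen I = k" using nz by simp
  then show "c / gen I \<in> \<O> F" "c = gen I * (c / gen I)" using k by auto
qed

lemma Div_finite: assumes c: "c \<in> \<O> F" "c \<noteq> 0" shows "finite (Div c)"
proof -
  have "Div c \<subseteq> (\<lambda>T. idl (rep T) c) ` A c"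
  proof
    fix I assume "I \<in> Div c"
    then obtain d where d: "d \<in> \<O> F" "d \<noteq> 0" "dvdO F d c" "I = principal_ideal F d"
      unfolding Div_def by blast
    have "idl d c = principal_ideal F d"
      using d c dvdO_refl[OF d(1)] by (intro idl_gcd[where a = 1 and b = 0]) auto
    also have "idl d c = idl (rep (cls c d)) c"
      by (rule idl_cong[OF c(1) d(1) rep_cls(2)[OF c(1) d(1)] dvdO_swap[OF rep_cls(1)[OF c(1) d(1)]]])
    finally have "I = idl (rep (cls c d)) c" using d(4) by simp
    then show "I \<in> (\<lambda>T. idl (rep T) c) ` A c" using cls_A[OF d(1)] by blast
  qed
  then show ?thesis by (rule finite_surj[OF A_finite[OF c]])
qed

lemma partition:
  fixes \<Phi> :: "complex \<Rightarrow> 'a::comm_monoid_add"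
  assumes ps: "\<forall>p\<in>set ps. prime_elemO F p" and cdef: "c = prod_list ps" and iv: "invar c \<Phi>"
  shows "(\<Sum>T\<in>A c. \<Phi> (rep T)) = (\<Sum>I\<in>Div c. \<Sum>X\<in>unit_classes F (c / gen I). \<Phi> (gen I * rep X))"
proof -
  have c: "c \<in> \<O> F" "c \<noteq> 0" using prod_primes[OF ps] cdef by auto
  define S where "S = Sigma (Div c) (\<lambda>I. unit_classes F (c / gen I))"
  have finU: "finite (unit_classes F (c / gen I))" if "I \<in> Div c" for I
  proof -
    have "c / gen I \<in> \<O> F" "c / gen I \<noteq> 0" using Div_props[OF that c(1)] c(2) by auto
    then have "finite (A (c / gen I))" by (rule A_finite)
    then show ?thesis unfolding U_iff[OF \<open>c / gen I \<in> \<O> F\<close>] by simp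
  qed
  have SI: "gen I \<in> \<O> F \<and> gen I \<noteq> 0 \<and> c / gen I \<in> \<O> F \<and> gen I * (c / gen I) = c \<and>
      principal_ideal F (gen I) = I \<and> X \<in> A (c / gen I) \<and> isU (c / gen I) (rep X) \<and> rep X \<in> \<O> F"
    if "(I, X) \<in> S" for I X
  proof -
    have I: "I \<in> Div c" and X: "X \<in> unit_classes F (c / gen I)" using that unfolding S_def by auto
    note D = Div_props[OF I c(1)]
    have "X \<in> A (c / gen I)" "isU (c / gen I) (rep X)" using X unfolding U_iff[OF D(5)] by auto
    moreover have "rep X \<in> \<O> F" using rep_A(1)[OF D(5)] \<open>X \<in> A (c / gen I)\<close> .
    ultimately show ?thesis using D(1,2,3,4,5) D(6)[symmetric] by auto
  qed
  define \<pi> where "\<pi> p = cls c (gen (fst p) * rep (snd p))" for p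
  have bij: "bij_betw \<pi> S (A c)"
  proof (rule bij_betw_imageI)
    show "inj_on \<pi> S"
    proof (rule inj_onI)
      fix p p' assume pS: "p \<in> S" "p' \<in> S" and eq: "\<pi> p = \<pi> p'"
      obtain I X I' X' where pp: "p = (I, X)" "p' = (I', X')" by (cases p, cases p')
      note h = SI[OF pS(1)[unfolded pp]] and h' = SI[OF pS(2)[unfolded pp]]
      have zO: "gen I * rep X \<in> \<O> F" "gen I' * rep X' \<in> \<O> F" using h h' by auto
      have dz: "dvdO F c (gen I * rep X - gen I' * rep X')"
        using eq unfolding \<pi>_def pp by (simp add: cls_eq[OF c(1) zO])
      have "idl (gen I * rep X) c = idl (gen I' * rep X') c" using idl_cong[OF c(1) zO dz] .
      moreover have "idl (gen I * rep X) c = principal_ideal F (gen I)"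
        using h by (intro idl_unit[where c' = "c / gen I"]) auto
      moreover have "idl (gen I' * rep X') c = principal_ideal F (gen I')"
        using h' by (intro idl_unit[where c' = "c / gen I'"]) auto
      ultimately have II: "I = I'" using h h' by simp
      have hI: "gen I \<noteq> 0" "c = gen I * (c / gen I)" "c / gen I \<in> \<O> F" "rep X \<in> \<O> F" using h by auto
      have hI': "rep X' \<in> \<O> F" using h' by auto
      have "gen I * rep X - gen I' * rep X' = gen I * (rep X - rep X')" using II by (simp add: right_diff_distrib)
      then have "dvdO F c (gen I * (rep X - rep X'))" using dz by simp
      then have "dvdO F (c / gen I) (rep X - rep X')" by (rule cancel[OF hI(1,2)])
      then have "cls (c / gen I) (rep X) = cls (c / gen I) (rep X')"
        by (rule iffD2[OF cls_eq[OF hI(3,4) hI']])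
      moreover have "cls (c / gen I) (rep X) = X" using rep_A(2)[of "c / gen I" X] h by auto
      moreover have "cls (c / gen I) (rep X') = X'" using rep_A(2)[of "c / gen I" X'] h' II by auto
      ultimately have "X = X'" by simp
      then show "p = p'" using pp II by simp
    qed
    show "\<pi> ` S = A c"
    proof
      show "\<pi> ` S \<subseteq> A c"
      proof
        fix T assume "T \<in> \<pi> ` S"
        then obtain I X where IX: "(I, X) \<in> S" "T = \<pi> (I, X)" by auto
        then show "T \<in> A c" unfolding \<pi>_def using SI[OF IX(1)] by (auto intro: cls_A)
      qed
      show "A c \<subseteq> \<pi> ` S"
      proof
        fix T assume T: "T \<in> A c"
        define t where "t = rep T"
        have tO: "t \<in> \<O> F" unfolding t_def using rep_A(1)[OF c(1) T] .
        obtain d0 where d0: "d0 \<in> \<O> F" "d0 \<noteq> 0" "dvdO F d0 c" "dvdO F d0 t"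
          and ab: "\<exists>a\<in>\<O> F. \<exists>b\<in>\<O> F. d0 = a * t + b * c"
          using gcd_exists[OF ps tO] cdef by blast
        obtain a b where ab': "a \<in> \<O> F" "b \<in> \<O> F" "d0 = a * t + b * c" using ab by blast
        have idt: "idl t c = principal_ideal F d0" using idl_gcd[OF d0(1) tO c(1) d0(3,4) ab'] .
        define I where "I = principal_ideal F d0"
        have I: "I \<in> Div c" unfolding I_def Div_def using d0 by blast
        note D = Div_props[OF I c(1)]
        define d where "d = gen I"
        define c' where "c' = c / d"
        have idt': "idl t c = principal_ideal F d" using idt D(4) unfolding I_def d_def by simp
        have "t \<in> idl t c" unfolding idl_def using tO by (intro CollectI exI[of _ 1] exI[of _ 0]) auto
        then have "dvdO F d t" using idt' by (simp add: pi_mem)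
        then obtain r where r: "r \<in> \<O> F" "t = d * r" unfolding dvdO_def by blast
        have "d \<in> principal_ideal F d" using dvdO_refl D(1) unfolding d_def by (simp add: pi_mem)
        then have "d \<in> idl t c" using idt' by simp
        then obtain x y where xy: "x \<in> \<O> F" "y \<in> \<O> F" "d = t * x + c * y" unfolding idl_def by blast
        have "d * 1 = d * (r * x + c' * y)" using xy(3) r(2) D(6) unfolding c'_def d_def
          by (simp add: algebra_simps)
        then have "1 = r * x + c' * y" using D(2) unfolding d_def by simp
        then have "r * x - 1 = c' * (- y)" by (simp add: algebra_simps)
        moreover have "- y \<in> \<O> F" using xy by auto
        ultimately have "dvdO F c' (r * x - 1)" unfolding dvdO_def by blast
        then have rU: "isU c' r" unfolding isU_def using xy(1) by blast
        have c'O: "c' \<in> \<O> F" unfolding c'_def d_def using D(5) .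
        define X where "X = cls c' r"
        have XA: "X \<in> A c'" unfolding X_def using cls_A[OF r(1)] .
        have rX: "dvdO F c' (rep X - r)" "rep X \<in> \<O> F" unfolding X_def using rep_cls[OF c'O r(1)] by auto
        have "isU c' (rep X)" using isU_cong[OF c'O r(1) rX(2) dvdO_swap[OF rX(1)] rU] .
        then have XU: "X \<in> unit_classes F c'" unfolding U_iff[OF c'O] using XA by simp
        have IXS: "(I, X) \<in> S" unfolding S_def using I XU unfolding c'_def d_def by simp
        have cdc: "c = d * c'" using D(6) unfolding c'_def d_def .
        have "dvdO F c (d * (rep X - r))" by (rule cancel_rev[OF cdc rX(1)])
        then have "dvdO F c (d * rep X - t)" using r(2) by (simp add: algebra_simps)
        then have "cls c (d * rep X) = cls c t"
          using D(1) rX(2) tO unfolding d_def by (subst cls_eq[OF c(1)]) auto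
        then have "\<pi> (I, X) = T" unfolding \<pi>_def d_def t_def using rep_A(2)[OF c(1) T] by simp
        then show "T \<in> \<pi> ` S" using IXS by force
      qed
    qed
  qed
  have finS: "finite (Div c)" using Div_finite[OF c] .
  have "(\<Sum>I\<in>Div c. \<Sum>X\<in>unit_classes F (c / gen I). \<Phi> (gen I * rep X)) =
      (\<Sum>p\<in>S. \<Phi> (gen (fst p) * rep (snd p)))"
    unfolding S_def using finS finU by (subst sum.Sigma) (auto simp: case_prod_beta)
  also have "\<dots> = (\<Sum>p\<in>S. \<Phi> (rep (\<pi> p)))"
  proof (intro sum.cong refl)
    fix p assume "p \<in> S"
    then obtain I X where IX: "(I, X) \<in> S" "p = (I, X)" by (cases p) auto
    have "gen I * rep X \<in> \<O> F" using SI[OF IX(1)] by auto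
    then show "\<Phi> (gen (fst p) * rep (snd p)) = \<Phi> (rep (\<pi> p))"
      unfolding \<pi>_def IX(2) using rep_cls_invar[OF c(1) iv] by simp
  qed
  also have "\<dots> = (\<Sum>T\<in>A c. \<Phi> (rep T))" using sum.reindex_bij_betw[OF bij] .
  finally show ?thesis by simp
qed

end

context nf
begin

lemma fiber:
  fixes \<Phi> :: "complex \<Rightarrow> 'a::comm_monoid_add"
  assumes O: "c \<in> \<O> F" "c' \<in> \<O> F" "d \<in> \<O> F" and cd: "c = c' * d" and nz: "c' \<noteq> 0" "d \<noteq> 0"
    and x0: "x0 \<in> \<O> F" and iv: "invar c \<Phi>"
  shows "(\<Sum>X\<in>A c. if dvdO F c' (rep X - x0) then \<Phi> (rep X) else 0) = (\<Sum>Z\<in>A d. \<Phi> (x0 + c' * rep Z))"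
proof -
  have c0: "c \<noteq> 0" using cd nz by simp
  define Fs where "Fs = {X\<in>A c. dvdO F c' (rep X - x0)}"
  have c'c: "dvdO F c' c" using cd O unfolding dvdO_def by blast
  define \<pi> where "\<pi> Z = cls c (x0 + c' * rep Z)" for Z
  have zO: "x0 + c' * rep Z \<in> \<O> F" if "Z \<in> A d" for Z using O x0 rep_A(1)[OF O(3) that] by auto
  have bij: "bij_betw \<pi> (A d) Fs"
  proof (rule bij_betw_imageI)
    show "inj_on \<pi> (A d)"
    proof (rule inj_onI)
      fix Z Z' assume Z: "Z \<in> A d" "Z' \<in> A d" "\<pi> Z = \<pi> Z'"
      have "dvdO F c ((x0 + c' * rep Z) - (x0 + c' * rep Z'))"
        using Z(3) unfolding \<pi>_def by (rule iffD1[OF cls_eq[OF O(1) zO[OF Z(1)] zO[OF Z(2)]]])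
      then have "dvdO F c (c' * (rep Z - rep Z'))" by (simp add: algebra_simps)
      then have "dvdO F d (rep Z - rep Z')" by (rule cancel[OF nz(1) cd])
      then have "cls d (rep Z) = cls d (rep Z')"
        by (rule iffD2[OF cls_eq[OF O(3) rep_A(1)[OF O(3) Z(1)] rep_A(1)[OF O(3) Z(2)]]])
      then show "Z = Z'" using rep_A(2)[OF O(3) Z(1)] rep_A(2)[OF O(3) Z(2)] by simp
    qed
    show "\<pi> ` A d = Fs"
    proof
      show "\<pi> ` A d \<subseteq> Fs"
      proof
        fix X assume "X \<in> \<pi> ` A d"
        then obtain Z where Z: "Z \<in> A d" "X = \<pi> Z" by auto
        have XA: "X \<in> A c" unfolding Z(2) \<pi>_def using cls_A[OF zO[OF Z(1)]] .
        have r: "dvdO F c (rep X - (x0 + c' * rep Z))" "rep X \<in> \<O> F"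
          unfolding Z(2) \<pi>_def using rep_cls[OF O(1) zO[OF Z(1)]] by auto
        have "dvdO F c' (rep X - (x0 + c' * rep Z))" using dvdO_trans[OF c'c r(1)] .
        moreover have "dvdO F c' (c' * rep Z)" using dvdO_mult[OF dvdO_refl[OF O(2)] rep_A(1)[OF O(3) Z(1)]] .
        ultimately have "dvdO F c' ((rep X - (x0 + c' * rep Z)) + c' * rep Z)" by (rule dvdO_add)
        then have "dvdO F c' (rep X - x0)" by simp
        then show "X \<in> Fs" unfolding Fs_def using XA by simp
      qed
      show "Fs \<subseteq> \<pi> ` A d"
      proof
        fix X assume X: "X \<in> Fs"
        then have XA: "X \<in> A c" and dv: "dvdO F c' (rep X - x0)" unfolding Fs_def by auto
        obtain w where w: "w \<in> \<O> F" "rep X - x0 = c' * w" using dv unfolding dvdO_def by blast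
        define Z where "Z = cls d w"
        have ZA: "Z \<in> A d" unfolding Z_def using cls_A[OF w(1)] .
        have rZ: "dvdO F d (rep Z - w)" "rep Z \<in> \<O> F" unfolding Z_def using rep_cls[OF O(3) w(1)] by auto
        have "dvdO F c (c' * (rep Z - w))" by (rule cancel_rev[OF cd rZ(1)])
        moreover have "c' * (rep Z - w) = (x0 + c' * rep Z) - rep X" using w(2) by (simp add: algebra_simps)
        ultimately have "dvdO F c ((x0 + c' * rep Z) - rep X)" by simp
        then have "\<pi> Z = cls c (rep X)" unfolding \<pi>_def
          by (rule iffD2[OF cls_eq[OF O(1) zO[OF ZA] rep_A(1)[OF O(1) XA]]])
        then have "\<pi> Z = X" using rep_A(2)[OF O(1) XA] by simp
        then show "X \<in> \<pi> ` A d" using ZA by blast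
      qed
    qed
  qed
  have "(\<Sum>X\<in>A c. if dvdO F c' (rep X - x0) then \<Phi> (rep X) else 0) = (\<Sum>X\<in>Fs. \<Phi> (rep X))"
    unfolding Fs_def using A_finite[OF O(1) c0] by (simp add: sum.inter_filter)
  also have "\<dots> = (\<Sum>Z\<in>A d. \<Phi> (rep (\<pi> Z)))" using sum.reindex_bij_betw[OF bij, of "\<lambda>X. \<Phi> (rep X)"] by simp
  also have "\<dots> = (\<Sum>Z\<in>A d. \<Phi> (x0 + c' * rep Z))"
    unfolding \<pi>_def using rep_cls_invar[OF O(1) iv] zO by (intro sum.cong refl) auto
  finally show ?thesis .
qed

lemma H_eval:
  assumes c: "c \<in> \<O> F" "c \<noteq> 0" and d: "d \<in> \<O> F" "d \<noteq> 0" and c': "c' \<in> \<O> F" "c = d * c'"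
    and u: "u \<in> \<O> F" "isU c' u" and \<nu>: "\<nu> \<in> \<O> F" and \<mu>: "\<mu> \<in> \<O> F"
  shows "(\<Sum>X\<in>A c. if dvdO F c (d * u * rep X + \<mu>) then \<psi> c (\<nu> * rep X) else 0) =
    (if dvdO F d \<nu> \<and> dvdO F d \<mu> then of_nat (card (A d)) * \<psi> c' (- (\<nu> / d) * (\<mu> / d) * minv c' u) else 0)"
proof -
  have c'0: "c' \<noteq> 0" using c c' by auto
  have dc: "dvdO F d c" using c' d unfolding dvdO_def by blast
  have repO: "\<And>X. X \<in> A c \<Longrightarrow> rep X \<in> \<O> F" using rep_A(1)[OF c(1)] .
  show ?thesis
  proof (cases "dvdO F d \<mu>")
    case False
    have "\<not> dvdO F c (d * u * rep X + \<mu>)" if "X \<in> A c" for X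
    proof
      assume "dvdO F c (d * u * rep X + \<mu>)"
      then have "dvdO F d (d * u * rep X + \<mu>)" using dvdO_trans[OF dc] by blast
      moreover have "dvdO F d (d * u * rep X)" using d u repO[OF that] unfolding dvdO_def
        by (intro bexI[of _ "u * rep X"]) (auto simp: mult.assoc)
      ultimately have "dvdO F d ((d * u * rep X + \<mu>) - d * u * rep X)" by (rule dvdO_diff)
      then show False using False by simp
    qed
    then show ?thesis using False by simp
  next
    case True
    obtain \<mu>' where \<mu>': "\<mu>' \<in> \<O> F" "\<mu> = d * \<mu>'" using True unfolding dvdO_def by blast
    note m = minv_prop[OF u(2)]
    define x0 where "x0 = - (minv c' u * \<mu>')"
    have x0O: "x0 \<in> \<O> F" unfolding x0_def using m \<mu>' by auto
    have iff: "dvdO F c (d * u * x + \<mu>) \<longleftrightarrow> dvdO F c' (x - x0)" if x: "x \<in> \<O> F" for x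
    proof -
      have e1: "d * u * x + \<mu> = d * (u * x + \<mu>')" using \<mu>' by (simp add: algebra_simps)
      have "dvdO F c (d * u * x + \<mu>) \<longleftrightarrow> dvdO F c' (u * x + \<mu>')"
        unfolding e1 using cancel[OF d(2) c'(2)] cancel_rev[OF c'(2)] by blast
      also have "\<dots> \<longleftrightarrow> dvdO F c' (x - x0)"
      proof
        assume h: "dvdO F c' (u * x + \<mu>')"
        have "x - x0 = minv c' u * (u * x + \<mu>') - (u * minv c' u - 1) * x" unfolding x0_def by (simp add: algebra_simps)
        moreover have "dvdO F c' (minv c' u * (u * x + \<mu>') - (u * minv c' u - 1) * x)"
          by (rule dvdO_diff[OF dvdO_mult_left[OF h m(1)] dvdO_mult[OF m(2) x]])
        ultimately show "dvdO F c' (x - x0)" by (simp only:)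
      next
        assume h: "dvdO F c' (x - x0)"
        have "u * x + \<mu>' = u * (x - x0) - (u * minv c' u - 1) * \<mu>'" unfolding x0_def by (simp add: algebra_simps)
        moreover have "dvdO F c' (u * (x - x0) - (u * minv c' u - 1) * \<mu>')"
          by (rule dvdO_diff[OF dvdO_mult_left[OF h u(1)] dvdO_mult[OF m(2) \<mu>'(1)]])
        ultimately show "dvdO F c' (u * x + \<mu>')" by (simp only:)
      qed
      finally show ?thesis .
    qed
    have "(\<Sum>X\<in>A c. if dvdO F c (d * u * rep X + \<mu>) then \<psi> c (\<nu> * rep X) else 0) =
        (\<Sum>X\<in>A c. if dvdO F c' (rep X - x0) then \<psi> c (\<nu> * rep X) else 0)"
      using iff repO by (intro sum.cong refl) auto
    also have "\<dots> = (\<Sum>Z\<in>A d. \<psi> c (\<nu> * (x0 + c' * rep Z)))"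
      using fiber[OF c(1) c'(1) d(1) _ c'0 d(2) x0O invar_psi[OF c \<nu>]] c'(2) by (simp add: mult.commute)
    also have "\<dots> = (\<Sum>Z\<in>A d. \<psi> c (\<nu> * x0) * \<psi> d (\<nu> * rep Z))"
    proof (intro sum.cong refl)
      fix Z assume Z: "Z \<in> A d"
      have rZ: "rep Z \<in> \<O> F" using rep_A(1)[OF d(1) Z] .
      have "\<psi> c (\<nu> * (x0 + c' * rep Z)) = \<psi> c (\<nu> * x0 + c' * (\<nu> * rep Z))" by (simp add: algebra_simps)
      also have "\<dots> = \<psi> c (\<nu> * x0) * \<psi> c (c' * (\<nu> * rep Z))"
        using c \<nu> x0O c' rZ by (intro psi_add) auto
      also have "\<psi> c (c' * (\<nu> * rep Z)) = \<psi> d (\<nu> * rep Z)"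
        using c'(2) c'0 by (intro psi_scale) (simp add: mult.commute)
      finally show "\<psi> c (\<nu> * (x0 + c' * rep Z)) = \<psi> c (\<nu> * x0) * \<psi> d (\<nu> * rep Z)" .
    qed
    also have "\<dots> = \<psi> c (\<nu> * x0) * (if dvdO F d \<nu> then of_nat (card (A d)) else 0)"
      by (simp add: sum_distrib_left[symmetric] orth[OF d \<nu>])
    also have "\<dots> = (if dvdO F d \<nu> \<and> dvdO F d \<mu> then of_nat (card (A d)) * \<psi> c' (- (\<nu> / d) * (\<mu> / d) * minv c' u) else 0)"
    proof (cases "dvdO F d \<nu>")
      case True2: True
      obtain \<nu>' where \<nu>': "\<nu>' \<in> \<O> F" "\<nu> = d * \<nu>'" using True2 unfolding dvdO_def by blast
      have "\<psi> c (\<nu> * x0) = \<psi> c (d * (\<nu>' * x0))" using \<nu>'(2) by (simp add: mult.assoc)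
      also have "\<dots> = \<psi> c' (\<nu>' * x0)" by (rule psi_scale[OF c'(2) d(2)])
      also have "\<nu>' * x0 = - (\<nu> / d) * (\<mu> / d) * minv c' u"
        unfolding x0_def using \<nu>'(2) \<mu>'(2) d(2) by (simp add: field_simps)
      finally show ?thesis using True True2 by simp
    qed simp
    finally show ?thesis .
  qed
qed

lemma minv_cong: assumes "c \<in> \<O> F" "x \<in> \<O> F" "x' \<in> \<O> F" "dvdO F c (x - x')" "isU c x"
  shows "dvdO F c (minv c x - minv c x')"
proof -
  have u': "isU c x'" using isU_cong[OF assms] .
  note m = minv_prop[OF assms(5)] and m' = minv_prop[OF u']
  have "x' * minv c x - 1 = (x * minv c x - 1) - (x - x') * minv c x" by (simp add: algebra_simps)
  moreover have "dvdO F c ((x * minv c x - 1) - (x - x') * minv c x)"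
    by (rule dvdO_diff[OF m(2) dvdO_mult[OF assms(4) m(1)]])
  ultimately have "dvdO F c (x' * minv c x - 1)" by (simp only:)
  then show ?thesis using minv_unique[OF assms(3) m(1) m'(1) _ m'(2)] by blast
qed

lemma isU_neg: assumes "isU c x" "x \<in> \<O> F" shows "isU c (- x)" "dvdO F c (minv c (- x) - (- minv c x))"
proof -
  note m = minv_prop[OF assms(1)]
  have "(- x) * (- minv c x) - 1 = x * minv c x - 1" by simp
  then have h: "dvdO F c ((- x) * (- minv c x) - 1)" using m(2) by simp
  show u: "isU c (- x)" unfolding isU_def using h m(1) by blast
  note m' = minv_prop[OF u]
  have "- x \<in> \<O> F" "- minv c x \<in> \<O> F" using assms(2) m(1) by auto
  then show "dvdO F c (minv c (- x) - (- minv c x))" using minv_unique[OF _ m'(1) _ m'(2) h] by blast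
qed

lemma isU_neg_iff: assumes "x \<in> \<O> F" shows "isU c (- x) \<longleftrightarrow> isU c x"
  using isU_neg(1)[OF _ assms] isU_neg(1)[of c "- x"] assms by auto

lemma kl_neg:
  assumes c: "c \<in> \<O> F" "c \<noteq> 0" and k: "k \<in> \<O> F"
  shows "(\<Sum>X\<in>unit_classes F c. \<psi> c (- rep X - k * minv c (rep X))) =
    (\<Sum>X\<in>unit_classes F c. \<psi> c (rep X + k * minv c (rep X)))"
proof -
  define G where "G x = (if isU c x then \<psi> c (x + k * minv c x) else 0)" for x
  have iv: "invar c G" unfolding invar_def
  proof (intro ballI impI)
    fix x y assume xy: "x \<in> \<O> F" "y \<in> \<O> F" "dvdO F c (x - y)"
    have eqU: "isU c x \<longleftrightarrow> isU c y" using isU_cong[OF c(1) xy] isU_cong[OF c(1) xy(2,1) dvdO_swap[OF xy(3)]] by blast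
    show "G x = G y"
    proof (cases "isU c x")
      case True
      have mc: "dvdO F c (minv c x - minv c y)" using minv_cong[OF c(1) xy True] .
      have mO: "minv c x \<in> \<O> F" "minv c y \<in> \<O> F" using minv_prop(1) True eqU by auto
      have "(x + k * minv c x) - (y + k * minv c y) = (x - y) + k * (minv c x - minv c y)" by (simp add: algebra_simps)
      moreover have "dvdO F c ((x - y) + k * (minv c x - minv c y))"
        by (rule dvdO_add[OF xy(3) dvdO_mult_left[OF mc k]])
      ultimately have "dvdO F c ((x + k * minv c x) - (y + k * minv c y))" by (simp only:)
      then have "\<psi> c (x + k * minv c x) = \<psi> c (y + k * minv c y)"
        using c xy mO k by (intro psi_cong) auto
      then show ?thesis unfolding G_def using True eqU by simp
    next
      case False
      then show ?thesis unfolding G_def using eqU by simp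
    qed
  qed
  have fin: "finite (A c)" using A_finite[OF c] .
  have repO: "\<And>X. X \<in> A c \<Longrightarrow> rep X \<in> \<O> F" using rep_A(1)[OF c(1)] .
  have "(\<Sum>X\<in>unit_classes F c. \<psi> c (rep X + k * minv c (rep X))) = (\<Sum>X\<in>A c. G (rep X))"
    unfolding U_iff[OF c(1)] G_def using fin by (simp add: sum.inter_filter)
  moreover have "(\<Sum>X\<in>unit_classes F c. \<psi> c (- rep X - k * minv c (rep X))) = (\<Sum>X\<in>A c. G (- rep X))"
  proof -
    have "(\<Sum>X\<in>unit_classes F c. \<psi> c (- rep X - k * minv c (rep X))) =
        (\<Sum>X\<in>A c. if isU c (rep X) then \<psi> c (- rep X - k * minv c (rep X)) else 0)"
      unfolding U_iff[OF c(1)] using fin by (simp add: sum.inter_filter)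
    also have "\<dots> = (\<Sum>X\<in>A c. G (- rep X))"
    proof (intro sum.cong refl)
      fix X assume X: "X \<in> A c"
      note r = repO[OF X]
      show "(if isU c (rep X) then \<psi> c (- rep X - k * minv c (rep X)) else 0) = G (- rep X)"
      proof (cases "isU c (rep X)")
        case True
        note n = isU_neg[OF True r]
        have mO: "minv c (- rep X) \<in> \<O> F" "minv c (rep X) \<in> \<O> F" using minv_prop(1) n(1) True by auto
        have "(- rep X + k * minv c (- rep X)) - (- rep X - k * minv c (rep X)) = k * (minv c (- rep X) - (- minv c (rep X)))"
          by (simp add: algebra_simps)
        moreover have "dvdO F c (k * (minv c (- rep X) - (- minv c (rep X))))" by (rule dvdO_mult_left[OF n(2) k])
        ultimately have "dvdO F c ((- rep X + k * minv c (- rep X)) - (- rep X - k * minv c (rep X)))" by (simp only:)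
        then have "\<psi> c (- rep X + k * minv c (- rep X)) = \<psi> c (- rep X - k * minv c (rep X))"
          using c r mO k by (intro psi_cong) auto
        then show ?thesis unfolding G_def using True n(1) by simp
      next
        case False
        then show ?thesis unfolding G_def using isU_neg_iff[OF r] by simp
      qed
    qed
    finally show ?thesis .
  qed
  moreover have "(\<Sum>X\<in>A c. G (- rep X)) = (\<Sum>X\<in>A c. G (rep X))"
  proof (rule sum_A_map[OF c(1) iv, where h = uminus])
    show "\<And>x. x \<in> \<O> F \<Longrightarrow> - x \<in> \<O> F" by auto
    show "\<And>x y. dvdO F c (x - y) \<Longrightarrow> dvdO F c (- x - - y)" using dvdO_uminus by fastforce
    show "\<And>x y. dvdO F c (- x - - y) \<Longrightarrow> dvdO F c (x - y)" using dvdO_uminus by fastforce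
    show "\<And>y. y \<in> \<O> F \<Longrightarrow> \<exists>x\<in>\<O> F. dvdO F c (- x - y)" using dvdO_0 by (intro bexI[of _ "- y" for y]) auto
  qed
  ultimately show ?thesis by simp
qed

end

context nf
begin

lemma main:
  assumes ps: "\<forall>p\<in>set ps. prime_elemO F p" and qd: "q = prod_list ps"
    and \<nu>: "\<nu> \<in> \<O> F" and \<mu>: "\<mu> \<in> \<O> F"
  shows "kloosterman F (\<nu> / \<delta>) (\<mu> / \<delta>) q =
    (\<Sum>I\<in>{principal_ideal F d | d. d \<in> \<O> F \<and> d \<noteq> 0 \<and>
                 dvdO F d \<nu> \<and> dvdO F d \<mu> \<and> dvdO F d q}.
       let d = (SOME d. d \<in> \<O> F \<and> I = principal_ideal F d)
       in of_nat (ideal_norm F d) * kloosterman F (1 / \<delta>) (\<nu> * \<mu> / (\<delta> * d\<^sup>2)) (q / d))"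
proof -
  have c: "q \<in> \<O> F" "q \<noteq> 0" using prod_primes[OF ps] qd by auto
  define H where "H t = (\<Sum>X\<in>A q. if dvdO F q (t * rep X + \<mu>) then \<psi> q (\<nu> * rep X) else 0)" for t
  define \<Phi> where "\<Phi> t = \<psi> q (- t) * H t" for t
  have iv: "invar q \<Phi>" unfolding invar_def
  proof (intro ballI impI)
    fix t t' assume tt: "t \<in> \<O> F" "t' \<in> \<O> F" "dvdO F q (t - t')"
    have "\<psi> q (- t) = \<psi> q (- t')" using c tt dvdO_uminus[OF tt(3)] by (intro psi_cong) auto
    moreover have "H t = H t'" unfolding H_def
    proof (intro sum.cong refl)
      fix X assume X: "X \<in> A q"
      have r: "rep X \<in> \<O> F" using rep_A(1)[OF c(1) X] .
      have "(t * rep X + \<mu>) - (t' * rep X + \<mu>) = (t - t') * rep X" by (simp add: algebra_simps)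
      then have d1: "dvdO F q ((t * rep X + \<mu>) - (t' * rep X + \<mu>))" using dvdO_mult[OF tt(3) r] by simp
      have "dvdO F q (t * rep X + \<mu>) \<longleftrightarrow> dvdO F q (t' * rep X + \<mu>)"
      proof
        assume "dvdO F q (t * rep X + \<mu>)"
        from dvdO_diff[OF this d1] show "dvdO F q (t' * rep X + \<mu>)" by (simp add: algebra_simps)
      next
        assume "dvdO F q (t' * rep X + \<mu>)"
        from dvdO_add[OF d1 this] show "dvdO F q (t * rep X + \<mu>)" by (simp add: algebra_simps)
      qed
      then show "(if dvdO F q (t * rep X + \<mu>) then \<psi> q (\<nu> * rep X) else 0) =
          (if dvdO F q (t' * rep X + \<mu>) then \<psi> q (\<nu> * rep X) else 0)" by simp
    qed
    ultimately show "\<Phi> t = \<Phi> t'" unfolding \<Phi>_def by simp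
  qed
  define cond where "cond I \<longleftrightarrow> dvdO F (gen I) \<nu> \<and> dvdO F (gen I) \<mu>" for I
  define Kl where "Kl I = kloosterman F (1 / \<delta>) ((\<nu> / gen I) * (\<mu> / gen I) / \<delta>) (q / gen I)" for I
  have "kloosterman F (\<nu> / \<delta>) (\<mu> / \<delta>) q = (\<Sum>T\<in>A q. \<Phi> (rep T))"
    unfolding \<Phi>_def H_def using step1[OF c \<nu> \<mu>] by simp
  also have "\<dots> = (\<Sum>I\<in>Div q. \<Sum>X\<in>unit_classes F (q / gen I). \<Phi> (gen I * rep X))"
    using partition[OF ps qd iv] .
  also have "\<dots> = (\<Sum>I\<in>Div q. if cond I then of_nat (card (A (gen I))) * Kl I else 0)"
  proof (intro sum.cong refl)
    fix I assume I: "I \<in> Div q"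
    note D = Div_props[OF I c(1)]
    define d where "d = gen I"
    define c' where "c' = q / d"
    have dO: "d \<in> \<O> F" "d \<noteq> 0" and c'O: "c' \<in> \<O> F" and qdc: "q = d * c'"
      using D unfolding d_def c'_def by auto
    have c'0: "c' \<noteq> 0" using c(2) qdc by auto
    have UA: "\<And>X. X \<in> unit_classes F c' \<Longrightarrow> rep X \<in> \<O> F \<and> isU c' (rep X)"
      unfolding U_iff[OF c'O] using rep_A(1)[OF c'O] by auto
    show "(\<Sum>X\<in>unit_classes F (q / gen I). \<Phi> (gen I * rep X)) = (if cond I then of_nat (card (A (gen I))) * Kl I else 0)"
    proof (cases "cond I")
      case False
      have "\<Phi> (d * rep X) = 0" if X: "X \<in> unit_classes F c'" for X
        unfolding \<Phi>_def H_def using H_eval[OF c dO c'O qdc conjunct1[OF UA[OF X]] conjunct2[OF UA[OF X]] \<nu> \<mu>] False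
        unfolding cond_def d_def by simp
      then show ?thesis using False unfolding d_def c'_def by simp
    next
      case True
      obtain \<nu>' where \<nu>': "\<nu>' \<in> \<O> F" "\<nu> = d * \<nu>'" using True unfolding cond_def d_def dvdO_def by blast
      obtain \<mu>' where \<mu>': "\<mu>' \<in> \<O> F" "\<mu> = d * \<mu>'" using True unfolding cond_def d_def dvdO_def by blast
      define k where "k = (\<nu> / d) * (\<mu> / d)"
      have kO: "k \<in> \<O> F" unfolding k_def using \<nu>' \<mu>' dO by auto
      have "\<Phi> (d * rep X) = of_nat (card (A d)) * \<psi> c' (- rep X - k * minv c' (rep X))"
        if X: "X \<in> unit_classes F c'" for X
      proof -
        have u: "rep X \<in> \<O> F" "isU c' (rep X)" using UA[OF X] by auto
        have "\<psi> q (- (d * rep X)) = \<psi> c' (- rep X)" using psi_scale[OF qdc dO(2), of "- rep X"] by simp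
        moreover have "H (d * rep X) = of_nat (card (A d)) * \<psi> c' (- (\<nu> / d) * (\<mu> / d) * minv c' (rep X))"
          unfolding H_def using H_eval[OF c dO c'O qdc u \<nu> \<mu>] True unfolding cond_def d_def by simp
        moreover have "\<psi> c' (- rep X) * \<psi> c' (- (\<nu> / d) * (\<mu> / d) * minv c' (rep X)) = \<psi> c' (- rep X - k * minv c' (rep X))"
        proof -
          have mO: "minv c' (rep X) \<in> \<O> F" using minv_prop(1)[OF u(2)] .
          have "\<psi> c' (- rep X) * \<psi> c' (- k * minv c' (rep X)) = \<psi> c' (- rep X + - k * minv c' (rep X))"
            using c'O u mO kO by (intro psi_add[symmetric]) auto
          then show ?thesis unfolding k_def by (simp add: algebra_simps)
        qed
        ultimately show ?thesis unfolding \<Phi>_def by (simp add: mult_ac)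
      qed
      then have "(\<Sum>X\<in>unit_classes F c'. \<Phi> (d * rep X)) =
          of_nat (card (A d)) * (\<Sum>X\<in>unit_classes F c'. \<psi> c' (- rep X - k * minv c' (rep X)))"
        by (simp add: sum_distrib_left)
      also have "\<dots> = of_nat (card (A d)) * (\<Sum>X\<in>unit_classes F c'. \<psi> c' (rep X + k * minv c' (rep X)))"
        using kl_neg[OF c'O c'0 kO] by simp
      also have "(\<Sum>X\<in>unit_classes F c'. \<psi> c' (rep X + k * minv c' (rep X))) = Kl I"
        unfolding Kl_def kloosterman_unfold \<psi>_def k_def d_def[symmetric] c'_def[symmetric]
        using delta_nz c'0 by (intro sum.cong refl) (simp add: field_simps)
      finally show ?thesis using True unfolding d_def c'_def by simp
    qed
  qed
  also have "\<dots> = (\<Sum>I\<in>{I\<in>Div q. cond I}. of_nat (card (A (gen I))) * Kl I)"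
    using Div_finite[OF c] by (simp add: sum.inter_filter)
  also have "{I\<in>Div q. cond I} = {principal_ideal F d | d. d \<in> \<O> F \<and> d \<noteq> 0 \<and>
                 dvdO F d \<nu> \<and> dvdO F d \<mu> \<and> dvdO F d q}"
  proof
    show "{I\<in>Div q. cond I} \<subseteq> {principal_ideal F d | d. d \<in> \<O> F \<and> d \<noteq> 0 \<and> dvdO F d \<nu> \<and> dvdO F d \<mu> \<and> dvdO F d q}"
    proof
      fix I assume "I \<in> {I\<in>Div q. cond I}"
      then obtain d where d: "d \<in> \<O> F" "d \<noteq> 0" "dvdO F d q" "I = principal_ideal F d" "cond I"
        unfolding Div_def by blast
      then have "dvdO F d \<nu>" "dvdO F d \<mu>" using gen_dvd_iff[OF d(1,4)] unfolding cond_def by auto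
      then show "I \<in> {principal_ideal F d | d. d \<in> \<O> F \<and> d \<noteq> 0 \<and> dvdO F d \<nu> \<and> dvdO F d \<mu> \<and> dvdO F d q}"
        using d by blast
    qed
    show "{principal_ideal F d | d. d \<in> \<O> F \<and> d \<noteq> 0 \<and> dvdO F d \<nu> \<and> dvdO F d \<mu> \<and> dvdO F d q} \<subseteq> {I\<in>Div q. cond I}"
    proof
      fix I assume "I \<in> {principal_ideal F d | d. d \<in> \<O> F \<and> d \<noteq> 0 \<and> dvdO F d \<nu> \<and> dvdO F d \<mu> \<and> dvdO F d q}"
      then obtain d where d: "d \<in> \<O> F" "d \<noteq> 0" "dvdO F d \<nu>" "dvdO F d \<mu>" "dvdO F d q" "I = principal_ideal F d"
        by blast
      have "cond I" unfolding cond_def using gen_dvd_iff[OF d(1,6)] d(3,4) by auto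
      moreover have "I \<in> Div q" unfolding Div_def using d by blast
      ultimately show "I \<in> {I\<in>Div q. cond I}" by simp
    qed
  qed
  also have "(\<Sum>I\<in>{principal_ideal F d | d. d \<in> \<O> F \<and> d \<noteq> 0 \<and> dvdO F d \<nu> \<and> dvdO F d \<mu> \<and> dvdO F d q}.
      of_nat (card (A (gen I))) * Kl I) =
    (\<Sum>I\<in>{principal_ideal F d | d. d \<in> \<O> F \<and> d \<noteq> 0 \<and>
                 dvdO F d \<nu> \<and> dvdO F d \<mu> \<and> dvdO F d q}.
       let d = (SOME d. d \<in> \<O> F \<and> I = principal_ideal F d)
       in of_nat (ideal_norm F d) * kloosterman F (1 / \<delta>) (\<nu> * \<mu> / (\<delta> * d\<^sup>2)) (q / d))"
  proof (intro sum.cong refl)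
    fix I
    have "(\<nu> / gen I) * (\<mu> / gen I) / \<delta> = \<nu> * \<mu> / (\<delta> * (gen I)\<^sup>2)" by (simp add: field_simps power2_eq_square)
    then show "of_nat (card (A (gen I))) * Kl I =
      (let d = (SOME d. d \<in> \<O> F \<and> I = principal_ideal F d)
       in of_nat (ideal_norm F d) * kloosterman F (1 / \<delta>) (\<nu> * \<mu> / (\<delta> * d\<^sup>2)) (q / d))"
      unfolding Let_def Kl_def gen_def[symmetric] ideal_norm_def A_def by (simp only:)
  qed
  finally show ?thesis .
qed

end

theorem theorem4p2:
  fixes F :: "complex set" and \<delta> q \<nu> \<mu> :: complex and ps :: "complex list"
  assumes "totally_real_number_field F"
    and "different_generator F \<delta>"
    and "\<forall>p\<in>set ps. prime_elemO F p" and "q = prod_list ps"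
    and "\<nu> \<in> \<O> F" and "\<mu> \<in> \<O> F"
  shows "kloosterman F (\<nu> / \<delta>) (\<mu> / \<delta>) q =
    (\<Sum>I\<in>{principal_ideal F d | d. d \<in> \<O> F \<and> d \<noteq> 0 \<and>
                 dvdO F d \<nu> \<and> dvdO F d \<mu> \<and> dvdO F d q}.
       let d = (SOME d. d \<in> \<O> F \<and> I = principal_ideal F d)
       in of_nat (ideal_norm F d) * kloosterman F (1 / \<delta>) (\<nu> * \<mu> / (\<delta> * d\<^sup>2)) (q / d))"
proof -
  interpret nf F \<delta>
    using assms(1,2) by unfold_locales (auto simp: totally_real_number_field_def)
  show ?thesis using main[OF assms(3,4,5,6)] .
qed

end
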